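(* Let $N\ge2$, $j,\ell\ge0$, and let $u\in\mathbb C^N$ be a unit vector; let $n_u=a^*(u)a(u)$ be the number operator of $u$ on $\mathcal H_{j+\ell}$. Then, with $\mathcal T^\ell$ acting on operators on $\mathcal H_j$, $$\mathcal T^\ell\big(|\otimes^j u\rangle\langle\otimes^j u|\big)=\frac{1}{j!}f_\ell(n_u),\qquad f_\ell(m)=\begin{cases}\frac{\ell!\,m!}{(m-j)!},& m\ge j,\\ 0,& m<j,\end{cases}$$ so $f_\ell$ is non-decreasing. In particular, for $M\ge1$, $k\ge0$ and a unit vector $v$, the nonzero eigenvalues of $\mathcal T^k(|\otimes^M v\rangle\langle\otimes^M v|)$ on $\mathcal H_{M+k}$ are $\frac{k!\,m!}{M!\,(m-M)!}$, $m=M,\dots,M+k$, the eigenvalue indexed by $m$ having multiplicity $\binom{M+k-m+N-2}{N-2}$.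
   Context: $\mathcal H_n=P_n(\mathbb C^N)^{\otimes n}$ is the totally symmetric subspace, $P_n$ the symmetrizing projection. For an operator $\Gamma$ on $\mathcal H_j$, $\mathcal T^\ell(\Gamma)=\frac{(j+\ell)!}{j!}P_{j+\ell}(I_{\mathbb C^N}^{\otimes\ell}\otimes\Gamma)P_{j+\ell}$. On the bosonic Fock space $\bigoplus_n\mathcal H_n$, $a^*(u)\phi=\sqrt{n+1}P_{n+1}(u\otimes\phi)$ for $\phi\in\mathcal H_n$ and $a(u)=a^*(u)^*$; $n_u=a^*(u)a(u)$ has eigenvalue $m$ on symmetrized tensors containing exactly $m$ factors $u$ and the remaining factors orthogonal to $u$. *)

theory Defs
  imports "HOL-Analysis.Analysis" "HOL-Combinatorics.Permutations"
    "HOL-Computational_Algebra.Polynomial" "HOL-Library.Function_Algebras"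
begin

text \<open>Order-n tensors over C^N are functions on multi-indices (lists of length n with
entries below N); operators are matrices indexed by such multi-indices.  Entries
outside the index sets are irrelevant (all sums range over the index sets).\<close>

type_synonym tensor = "nat list \<Rightarrow> complex"
type_synonym mop = "nat list \<Rightarrow> nat list \<Rightarrow> complex"

definition idx :: "nat \<Rightarrow> nat \<Rightarrow> nat list set" where
  "idx N n = {xs. length xs = n \<and> set xs \<subseteq> {..<N}}"

definition app :: "nat \<Rightarrow> nat \<Rightarrow> mop \<Rightarrow> tensor \<Rightarrow> tensor" where
  "app N n A \<psi> = (\<lambda>a. \<Sum>b\<in>idx N n. A a b * \<psi> b)"

definition mmul :: "nat \<Rightarrow> nat \<Rightarrow> mop \<Rightarrow> mop \<Rightarrow> mop" where
  "mmul N n A B = (\<lambda>a c. \<Sum>b\<in>idx N n. A a b * B b c)"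

definition id_op :: "nat \<Rightarrow> nat \<Rightarrow> mop" where
  "id_op N n = (\<lambda>a b. if a = b \<and> a \<in> idx N n then 1 else 0)"

text \<open>Symmetrizing projection P_n: (P psi)(a) = 1/n! * sum over sigma of psi(a o sigma).\<close>
definition sym_proj :: "nat \<Rightarrow> nat \<Rightarrow> mop" where
  "sym_proj N n = (\<lambda>a b. if a \<in> idx N n \<and> b \<in> idx N n
      then of_nat (card {\<sigma>. \<sigma> permutes {..<n} \<and> permute_list \<sigma> a = b}) / of_nat (fact n)
      else 0)"

definition Hsym :: "nat \<Rightarrow> nat \<Rightarrow> tensor set" where
  "Hsym N n = {\<psi>. (\<forall>a. a \<notin> idx N n \<longrightarrow> \<psi> a = 0) \<and> app N n (sym_proj N n) \<psi> = \<psi>}"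

definition id_tensor :: "nat \<Rightarrow> mop \<Rightarrow> mop" where
  "id_tensor l \<Gamma> = (\<lambda>a b. if take l a = take l b then \<Gamma> (drop l a) (drop l b) else 0)"

definition T_op :: "nat \<Rightarrow> nat \<Rightarrow> nat \<Rightarrow> mop \<Rightarrow> mop" where
  "T_op N j l \<Gamma> = (\<lambda>a b. (of_nat (fact (j + l)) / of_nat (fact j)) *
      mmul N (j + l) (mmul N (j + l) (sym_proj N (j + l)) (id_tensor l \<Gamma>)) (sym_proj N (j + l)) a b)"

definition proj_pow :: "(nat \<Rightarrow> complex) \<Rightarrow> mop" where
  "proj_pow u = (\<lambda>a b. prod_list (map u a) * cnj (prod_list (map u b)))"

definition unit_vec :: "nat \<Rightarrow> (nat \<Rightarrow> complex) \<Rightarrow> bool" where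
  "unit_vec N u \<longleftrightarrow> (\<Sum>i<N. (cmod (u i))\<^sup>2) = 1"

text \<open>Creation operator a^*(u): H_n -> H_{n+1}, a^*(u) phi = sqrt(n+1) P_{n+1}(u tensor phi).\<close>
definition creation :: "nat \<Rightarrow> nat \<Rightarrow> (nat \<Rightarrow> complex) \<Rightarrow> mop" where
  "creation N n u = (\<lambda>a b. of_real (sqrt (real (n + 1))) *
      (\<Sum>i<N. sym_proj N (n + 1) a (i # b) * u i))"

definition annihilation :: "nat \<Rightarrow> nat \<Rightarrow> (nat \<Rightarrow> complex) \<Rightarrow> mop" where
  "annihilation N n u = (\<lambda>b a. cnj (creation N n u a b))"

fun number_op :: "nat \<Rightarrow> nat \<Rightarrow> (nat \<Rightarrow> complex) \<Rightarrow> mop" where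
  "number_op N 0 u = (\<lambda>a b. 0)"
| "number_op N (Suc m) u = mmul N m (creation N m u) (annihilation N m u)"

definition specH :: "nat \<Rightarrow> nat \<Rightarrow> mop \<Rightarrow> complex set" where
  "specH N n A = {c. \<exists>\<psi>\<in>Hsym N n. \<psi> \<noteq> 0 \<and> app N n A \<psi> = (\<lambda>a. c * \<psi> a)}"

fun op_pow :: "nat \<Rightarrow> nat \<Rightarrow> mop \<Rightarrow> nat \<Rightarrow> mop" where
  "op_pow N n A 0 = id_op N n"
| "op_pow N n A (Suc i) = mmul N n A (op_pow N n A i)"

definition poly_op :: "nat \<Rightarrow> nat \<Rightarrow> complex poly \<Rightarrow> mop \<Rightarrow> mop" where
  "poly_op N n p A = (\<lambda>a b. \<Sum>i\<le>degree p. coeff p i * op_pow N n A i a b)"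

text \<open>Functional calculus for a diagonalizable operator A on H_n:
  f(A) = p(A), where p is the Lagrange polynomial interpolating f on the spectrum of A
  (equivalently f(A) = sum over eigenvalues of f(lambda) times the spectral projection).\<close>
definition fcalc :: "nat \<Rightarrow> nat \<Rightarrow> (complex \<Rightarrow> complex) \<Rightarrow> mop \<Rightarrow> mop" where
  "fcalc N n f A = mmul N n (sym_proj N n)
     (poly_op N n (\<Sum>c\<in>specH N n A. smult (f c)
        (\<Prod>\<mu>\<in>specH N n A - {c}. smult (1 / (c - \<mu>)) [:- \<mu>, 1:])) A)"

definition f_ell :: "nat \<Rightarrow> nat \<Rightarrow> nat \<Rightarrow> real" where
  "f_ell j l m = (if j \<le> m then fact l * fact m / fact (m - j) else 0)"

text \<open>Extension of a function on the naturals to the complex plane (the spectrum of n_u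
  lies in the naturals, so the values off the naturals are irrelevant).\<close>
definition nat_ext :: "(nat \<Rightarrow> real) \<Rightarrow> complex \<Rightarrow> complex" where
  "nat_ext g z = (if z \<in> \<nat> then of_real (g (nat \<lfloor>Re z\<rfloor>)) else 0)"

definition tensor_scale :: "complex \<Rightarrow> tensor \<Rightarrow> tensor" where
  "tensor_scale c \<psi> = (\<lambda>a. c * \<psi> a)"

end

theory Submission imports Defs begin

lemma finite_idx[simp]: "finite (idx N n)"
proof -
  have "idx N n = {xs. set xs \<subseteq> {..<N} \<and> length xs = n}" by (auto simp: idx_def)
  then show ?thesis using finite_lists_length_eq[of "{..<N}" n] by simp
qed

lemma idx_Suc: "idx N (Suc n) = (\<lambda>(k,a). k#a) ` ({..<N} \<times> idx N n)"
  by (auto simp: idx_def length_Suc_conv image_iff)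

lemma idx_0[simp]: "idx N 0 = {[]}" by (auto simp: idx_def)

lemma sum_idx_Suc: "(\<Sum>a\<in>idx N (Suc n). F a) = (\<Sum>k<N. \<Sum>a\<in>idx N n. F (k#a))"
proof -
  have inj: "inj_on (\<lambda>(k,a). k#a) ({..<N} \<times> idx N n)" by (auto simp: inj_on_def)
  have "(\<Sum>a\<in>idx N (Suc n). F a) = (\<Sum>x\<in>{..<N} \<times> idx N n. F ((\<lambda>(k,a). k#a) x))"
    unfolding idx_Suc by (rule sum.reindex[OF inj, unfolded comp_def])
  also have "\<dots> = (\<Sum>k<N. \<Sum>a\<in>idx N n. F (k#a))"
    by (simp add: sum.cartesian_product split_def)
  finally show ?thesis .
qed

lemma sum_idx_prod:
  "(\<Sum>a\<in>idx N n. \<Prod>t<n. f t (a!t)) = (\<Prod>t<n. \<Sum>k<N. (f t k :: 'a::comm_semiring_1))"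
proof (induction n arbitrary: f)
  case 0 then show ?case by simp
next
  case (Suc n)
  have "(\<Sum>a\<in>idx N (Suc n). \<Prod>t<Suc n. f t (a!t))
      = (\<Sum>k<N. \<Sum>a\<in>idx N n. f 0 k * (\<Prod>t<n. f (Suc t) (a!t)))"
    unfolding sum_idx_Suc prod.lessThan_Suc_shift by simp
  also have "\<dots> = (\<Sum>k<N. f 0 k * (\<Sum>a\<in>idx N n. (\<Prod>t<n. f (Suc t) (a!t))))"
    by (simp add: sum_distrib_left)
  also have "\<dots> = (\<Sum>k<N. f 0 k) * (\<Prod>t<n. \<Sum>k<N. f (Suc t) k)"
    by (simp add: Suc.IH[of "\<lambda>t. f (Suc t)"] sum_distrib_right)
  also have "\<dots> = (\<Prod>t<Suc n. \<Sum>k<N. f t k)"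
    unfolding prod.lessThan_Suc_shift by simp
  finally show ?case .
qed

definition perms :: "nat \<Rightarrow> (nat \<Rightarrow> nat) set" where
  "perms n = {\<sigma>. \<sigma> permutes {..<n}}"

lemma finite_perms[simp]: "finite (perms n)"
  unfolding perms_def by (rule finite_permutations) simp

lemma card_perms: "card (perms n) = fact n"
  unfolding perms_def by (rule card_permutations) auto

lemma idx_len: "a \<in> idx N n \<Longrightarrow> length a = n" by (simp add: idx_def)

lemma pl_idx: "\<sigma> \<in> perms n \<Longrightarrow> a \<in> idx N n \<Longrightarrow> permute_list \<sigma> a \<in> idx N n"
  by (auto simp: perms_def idx_def)

lemma pl_inv: "\<sigma> \<in> perms n \<Longrightarrow> length a = n \<Longrightarrow> permute_list (inv \<sigma>) (permute_list \<sigma> a) = a"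
proof -
  assume s: "\<sigma> \<in> perms n" and l: "length a = n"
  then have "inv \<sigma> permutes {..<length a}" by (auto simp: perms_def permutes_inv)
  then have "permute_list (\<sigma> \<circ> inv \<sigma>) a = permute_list (inv \<sigma>) (permute_list \<sigma> a)"
    by (rule permute_list_compose)
  moreover have "\<sigma> \<circ> inv \<sigma> = id" using s by (auto simp: perms_def permutes_inv_o)
  ultimately show ?thesis by simp
qed

lemma inv_perms: "\<sigma> \<in> perms n \<Longrightarrow> inv \<sigma> \<in> perms n"
  by (auto simp: perms_def permutes_inv)

lemma pl_bij: "\<sigma> \<in> perms n \<Longrightarrow> bij_betw (permute_list \<sigma>) (idx N n) (idx N n)"
  apply (rule bij_betw_byWitness[where f'="permute_list (inv \<sigma>)"])
  using pl_inv[of \<sigma> n] pl_inv[of "inv \<sigma>" n] inv_perms[of \<sigma>] idx_len pl_idx[of \<sigma> n] pl_idx[of "inv \<sigma>" n]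
  apply (auto simp: inv_inv_eq perms_def permutes_bij)
  using idx_len by blast+

lemma P_outside: "a \<notin> idx N n \<Longrightarrow> app N n (sym_proj N n) \<psi> a = 0"
  by (simp add: app_def sym_proj_def)

lemma P_app: assumes a: "a \<in> idx N n"
  shows "app N n (sym_proj N n) \<psi> a = (\<Sum>\<sigma>\<in>perms n. \<psi> (permute_list \<sigma> a)) / of_nat (fact n)"
proof -
  have "(\<Sum>\<sigma>\<in>perms n. \<psi> (permute_list \<sigma> a))
      = (\<Sum>b\<in>idx N n. \<Sum>\<sigma>\<in>{\<sigma>\<in>perms n. permute_list \<sigma> a = b}. \<psi> (permute_list \<sigma> a))"
    by (rule sum.group[symmetric]) (use pl_idx a in auto)
  also have "\<dots> = (\<Sum>b\<in>idx N n. of_nat (card {\<sigma>. \<sigma> permutes {..<n} \<and> permute_list \<sigma> a = b}) * \<psi> b)"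
    by (intro sum.cong refl) (simp add: perms_def)
  finally show ?thesis using a
    by (simp add: app_def sym_proj_def sum_divide_distrib)
qed

lemma prod_list_map_nth: "prod_list (map f xs) = (\<Prod>t<length xs. f (xs!t))"
proof (induction xs)
  case Nil then show ?case by simp
next
  case (Cons x xs) then show ?case by (simp add: prod.lessThan_Suc_shift del: prod.lessThan_Suc)
qed

lemma card_pl_sym: "card {\<sigma>. \<sigma> permutes {..<n} \<and> permute_list \<sigma> a = b}
   = card {\<sigma>. \<sigma> permutes {..<n} \<and> permute_list \<sigma> b = a}" if "length a = n" "length b = n"
proof -
  have *: "inv \<sigma> \<in> {\<sigma>. \<sigma> permutes {..<n} \<and> permute_list \<sigma> y = x}"
    if "\<sigma> \<in> {\<sigma>. \<sigma> permutes {..<n} \<and> permute_list \<sigma> x = y}" "length x = n" for \<sigma> x y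
  proof -
    have s: "\<sigma> \<in> perms n" "permute_list \<sigma> x = y" using that by (auto simp: perms_def)
    have "permute_list (inv \<sigma>) y = x" using pl_inv[OF s(1) that(2)] s(2) by simp
    then show ?thesis using inv_perms[OF s(1)] by (simp add: perms_def)
  qed
  have ii: "inv (inv \<sigma>) = \<sigma>" if "\<sigma> permutes S" for \<sigma> and S :: "nat set"
    using that by (simp add: inv_inv_eq permutes_bij)
  have "bij_betw inv {\<sigma>. \<sigma> permutes {..<n} \<and> permute_list \<sigma> a = b} {\<sigma>. \<sigma> permutes {..<n} \<and> permute_list \<sigma> b = a}"
    apply (rule bij_betw_byWitness[where f'=inv])
    using ii * that by blast+
  then show ?thesis by (rule bij_betw_same_card)
qed

lemma sym_proj_sym: "sym_proj N n a b = sym_proj N n b a"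
proof (cases "a \<in> idx N n \<and> b \<in> idx N n")
  case True then show ?thesis unfolding sym_proj_def using card_pl_sym[of a n b] by (simp add: idx_def)
next
  case False then show ?thesis unfolding sym_proj_def by auto
qed

lemma sym_proj_cnj: "cnj (sym_proj N n a b) = sym_proj N n b a"
  unfolding sym_proj_sym[of N n a b] by (simp add: sym_proj_def)

lemma sum_delta_lt: "i < (N::nat) \<Longrightarrow> (\<Sum>k<N. (if k = i then 1 else 0) * f k) = (f i :: complex)"
proof -
  assume i: "i < N"
  have "(\<Sum>k<N. (if k = i then 1 else 0) * f k) = (\<Sum>k\<in>{..<N}. if k = i then f k else 0)"
    by (rule sum.cong) auto
  also have "\<dots> = f i" using sum.delta[OF finite_lessThan[of N], of i f] i by simp
  finally show ?thesis .
qed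

lemma sum_delta_lt': "i < (N::nat) \<Longrightarrow> (\<Sum>k<N. f k * (if k = i then 1 else 0)) = (f i :: complex)"
  using sum_delta_lt[of i N f] by (simp add: mult.commute)

definition symt :: "nat \<Rightarrow> nat \<Rightarrow> tensor \<Rightarrow> bool" where
  "symt N n \<zeta> \<longleftrightarrow> (\<forall>a. a \<notin> idx N n \<longrightarrow> \<zeta> a = 0) \<and>
     (\<forall>\<sigma>\<in>perms n. \<forall>a\<in>idx N n. \<zeta> (permute_list \<sigma> a) = \<zeta> a)"

lemma pl_comp: "\<sigma> \<in> perms n \<Longrightarrow> \<tau> \<in> perms n \<Longrightarrow> length a = n \<Longrightarrow>
   permute_list \<sigma> (permute_list \<tau> a) = permute_list (\<tau> \<circ> \<sigma>) a"
  by (rule permute_list_compose[symmetric]) (simp add: perms_def)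

lemma comp_perms: "\<sigma> \<in> perms n \<Longrightarrow> \<tau> \<in> perms n \<Longrightarrow> \<tau> \<circ> \<sigma> \<in> perms n"
  by (simp add: perms_def permutes_compose)

lemma sum_perms_left: assumes t: "\<tau> \<in> perms n"
  shows "(\<Sum>\<sigma>\<in>perms n. g (\<tau> \<circ> \<sigma>)) = (\<Sum>\<sigma>\<in>perms n. g \<sigma>)"
proof (rule sum.reindex_bij_witness[where i="\<lambda>\<sigma>. inv \<tau> \<circ> \<sigma>" and j="\<lambda>\<sigma>. \<tau> \<circ> \<sigma>"])
  have tp: "\<tau> permutes {..<n}" using t by (simp add: perms_def)
  show "\<And>a. a \<in> perms n \<Longrightarrow> \<tau> \<circ> (inv \<tau> \<circ> a) = a"
    using permutes_inv_o(1)[OF tp] by (simp add: o_assoc)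
  show "\<And>a. a \<in> perms n \<Longrightarrow> inv \<tau> \<circ> a \<in> perms n" using comp_perms inv_perms t by blast
  show "\<And>a. a \<in> perms n \<Longrightarrow> inv \<tau> \<circ> (\<tau> \<circ> a) = a"
    using permutes_inv_o(2)[OF tp] by (simp add: o_assoc)
  show "\<And>a. a \<in> perms n \<Longrightarrow> \<tau> \<circ> a \<in> perms n" using comp_perms t by blast
  show "\<And>a. a \<in> perms n \<Longrightarrow> g (\<tau> \<circ> a) = g (\<tau> \<circ> a)" by simp
qed

lemma P_symt: "symt N n (app N n (sym_proj N n) \<zeta>)"
  unfolding symt_def
proof (intro conjI allI impI ballI)
  fix a assume "a \<notin> idx N n" then show "app N n (sym_proj N n) \<zeta> a = 0" by (rule P_outside)
next
  fix \<tau> a assume t: "\<tau> \<in> perms n" and a: "a \<in> idx N n"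
  have "app N n (sym_proj N n) \<zeta> (permute_list \<tau> a)
      = (\<Sum>\<sigma>\<in>perms n. \<zeta> (permute_list \<sigma> (permute_list \<tau> a))) / of_nat (fact n)"
    by (rule P_app[OF pl_idx[OF t a]])
  also have "\<dots> = (\<Sum>\<sigma>\<in>perms n. \<zeta> (permute_list (\<tau> \<circ> \<sigma>) a)) / of_nat (fact n)"
    using pl_comp[OF _ t idx_len[OF a]] by simp
  also have "\<dots> = (\<Sum>\<sigma>\<in>perms n. \<zeta> (permute_list \<sigma> a)) / of_nat (fact n)"
    using sum_perms_left[OF t, of "\<lambda>\<sigma>. \<zeta> (permute_list \<sigma> a)"] by simp
  also have "\<dots> = app N n (sym_proj N n) \<zeta> a" by (rule P_app[OF a, symmetric])
  finally show "app N n (sym_proj N n) \<zeta> (permute_list \<tau> a) = app N n (sym_proj N n) \<zeta> a" .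
qed

lemma symt_P: assumes "symt N n \<zeta>" shows "app N n (sym_proj N n) \<zeta> = \<zeta>"
proof
  fix a show "app N n (sym_proj N n) \<zeta> a = \<zeta> a"
  proof (cases "a \<in> idx N n")
    case True
    then have "app N n (sym_proj N n) \<zeta> a = (\<Sum>\<sigma>\<in>perms n. \<zeta> a) / of_nat (fact n)"
      using assms P_app[OF True] by (simp add: symt_def)
    then show ?thesis by (simp add: card_perms)
  next
    case False then show ?thesis using assms P_outside[OF False] by (simp add: symt_def)
  qed
qed

lemma Hsym_symt: "\<psi> \<in> Hsym N n \<longleftrightarrow> symt N n \<psi>"
proof
  assume "\<psi> \<in> Hsym N n"
  then have "app N n (sym_proj N n) \<psi> = \<psi>" by (simp add: Hsym_def)
  then show "symt N n \<psi>" using P_symt[of N n \<psi>] by simp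
next
  assume "symt N n \<psi>" then show "\<psi> \<in> Hsym N n" using symt_P by (auto simp: Hsym_def symt_def)
qed

lemma prod_delta: "(\<Prod>t<(n::nat). (if f t = g t then 1 else 0 :: complex)) = (if \<forall>t<n. f t = g t then 1 else 0)"
  by (induction n) (auto simp: less_Suc_eq)

definition DL :: "nat \<Rightarrow> nat set \<Rightarrow> nat list set" where
  "DL k A = {xs. length xs = k \<and> distinct xs \<and> set xs \<subseteq> A}"

lemma finite_DL: "finite A \<Longrightarrow> finite (DL k A)"
  unfolding DL_def by (rule finite_subset[OF _ finite_lists_length_eq[of A k]]) auto

lemma card_DL: assumes "finite A"
  shows "card (DL k A) = (if k \<le> card A then \<Prod>{card A - k + 1 .. card A} else 0)"
proof (cases "k \<le> card A")
  case True then show ?thesis unfolding DL_def using card_lists_distinct_length_eq[OF assms True] by simp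
next
  case False
  have "DL k A = {}"
  proof (rule ccontr)
    assume "DL k A \<noteq> {}"
    then obtain xs where xs: "length xs = k" "distinct xs" "set xs \<subseteq> A" by (auto simp: DL_def)
    then have "k \<le> card A" using card_mono[OF assms xs(3)] distinct_card[OF xs(2)] by simp
    then show False using False by simp
  qed
  then show ?thesis using False by simp
qed

lemma perm_list_bij: "bij_betw (\<lambda>\<sigma>. map \<sigma> [0..<n]) (perms n) (DL n {..<n})"
proof (rule bij_betw_imageI)
  show "inj_on (\<lambda>\<sigma>. map \<sigma> [0..<n]) (perms n)"
  proof (rule inj_onI)
    fix \<sigma> \<tau> assume s: "\<sigma> \<in> perms n" "\<tau> \<in> perms n" and e: "map \<sigma> [0..<n] = map \<tau> [0..<n]"
    show "\<sigma> = \<tau>"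
    proof
      fix x show "\<sigma> x = \<tau> x"
      proof (cases "x < n")
        case True
        have "\<forall>x\<in>{0..<n}. \<sigma> x = \<tau> x" using e by simp
        then show ?thesis using True by simp
      next
        case False then show ?thesis using s by (simp add: perms_def permutes_not_in)
      qed
    qed
  qed
  show "(\<lambda>\<sigma>. map \<sigma> [0..<n]) ` perms n = DL n {..<n}"
  proof
    show "(\<lambda>\<sigma>. map \<sigma> [0..<n]) ` perms n \<subseteq> DL n {..<n}"
    proof
      fix xs assume "xs \<in> (\<lambda>\<sigma>. map \<sigma> [0..<n]) ` perms n"
      then obtain \<sigma> where s: "\<sigma> \<in> perms n" and xs: "xs = map \<sigma> [0..<n]" by blast
      then have sp: "\<sigma> permutes {..<n}" by (simp add: perms_def)
      have "inj_on \<sigma> (set [0..<n])" by (rule inj_on_subset[OF permutes_inj[OF sp]]) simp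
      then have "distinct (map \<sigma> [0..<n])" by (simp add: distinct_map)
      moreover have "set (map \<sigma> [0..<n]) \<subseteq> {..<n}"
      proof
        fix y assume "y \<in> set (map \<sigma> [0..<n])"
        then obtain x where "x < n" "y = \<sigma> x" by auto
        then show "y \<in> {..<n}" using permutes_in_image[OF sp, of x] by simp
      qed
      ultimately show "xs \<in> DL n {..<n}" using xs by (simp add: DL_def)
    qed
    show "DL n {..<n} \<subseteq> (\<lambda>\<sigma>. map \<sigma> [0..<n]) ` perms n"
    proof
      fix xs assume xs: "xs \<in> DL n {..<n}"
      define \<sigma> where "\<sigma> i = (if i < n then xs!i else i)" for i
      have l: "length xs = n" "distinct xs" "set xs \<subseteq> {..<n}" using xs by (auto simp: DL_def)
      have "\<sigma> permutes {..<n}"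
      proof (rule inj_imp_permutes)
        show "inj_on \<sigma> {..<n}" using l by (auto simp: inj_on_def \<sigma>_def nth_eq_iff_index_eq)
        show "\<And>x. x \<in> {..<n} \<Longrightarrow> \<sigma> x \<in> {..<n}"
        proof -
          fix x assume "x \<in> {..<n}"
          then have "xs!x \<in> set xs" using l(1) by simp
          then show "\<sigma> x \<in> {..<n}" using l(3) \<open>x \<in> {..<n}\<close> by (auto simp: \<sigma>_def)
        qed
        show "\<And>i. i \<notin> {..<n} \<Longrightarrow> \<sigma> i = i" by (simp add: \<sigma>_def)
        show "finite {..<n}" by simp
      qed
      moreover have "xs = map \<sigma> [0..<n]" using l(1) by (simp add: \<sigma>_def list_eq_iff_nth_eq)
      ultimately show "xs \<in> (\<lambda>\<sigma>. map \<sigma> [0..<n]) ` perms n"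
        by (intro image_eqI[where x=\<sigma>]) (simp_all add: perms_def)
    qed
  qed
qed

lemma card_split:
  assumes Q: "Q \<subseteq> {..<n}" and ln: "l \<le> n"
  shows "card {xs\<in>DL n {..<n}. set (drop l xs) \<subseteq> Q}
       = (if n - l \<le> card Q then fact l * \<Prod>{card Q - (n - l) + 1 .. card Q} else 0)"
proof -
  define j where "j = n - l"
  have fQ: "finite Q" using Q finite_subset by blast
  let ?S = "SIGMA zs:DL j Q. DL l ({..<n} - set zs)"
  let ?f = "\<lambda>(zs, ys). ys @ zs"
  have eq: "{xs\<in>DL n {..<n}. set (drop l xs) \<subseteq> Q} = ?f ` ?S"
  proof
    show "{xs\<in>DL n {..<n}. set (drop l xs) \<subseteq> Q} \<subseteq> ?f ` ?S"
    proof clarify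
      fix xs assume xs: "xs \<in> DL n {..<n}" "set (drop l xs) \<subseteq> Q"
      have l: "length xs = n" "distinct xs" "set xs \<subseteq> {..<n}" using xs by (auto simp: DL_def)
      have d: "distinct (take l xs @ drop l xs)" using l by simp
      have "drop l xs \<in> DL j Q" using xs l by (auto simp: DL_def j_def)
      moreover have "take l xs \<in> DL l ({..<n} - set (drop l xs))"
        using l ln d set_take_subset[of l xs] unfolding DL_def distinct_append by auto
      ultimately have "(drop l xs, take l xs) \<in> ?S" by simp
      moreover have "xs = ?f (drop l xs, take l xs)" by simp
      ultimately show "xs \<in> ?f ` ?S" by (rule image_eqI[rotated])
    qed
    show "?f ` ?S \<subseteq> {xs\<in>DL n {..<n}. set (drop l xs) \<subseteq> Q}"
      using Q ln apply (auto simp: DL_def j_def)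
      by blast+
  qed
  have inj: "inj_on ?f ?S"
  proof (rule inj_onI)
    fix x y assume "x \<in> ?S" "y \<in> ?S" "?f x = ?f y"
    then show "x = y" by (cases x, cases y) (auto simp: DL_def append_eq_append_conv)
  qed
  have fin: "finite (DL j Q)" by (rule finite_DL[OF fQ])
  have c2: "card (DL l ({..<n} - set zs)) = fact l" if "zs \<in> DL j Q" for zs
  proof -
    have "card (set zs) = j" using that by (auto simp: DL_def distinct_card)
    moreover have "set zs \<subseteq> {..<n}" using that Q by (auto simp: DL_def)
    ultimately have "card ({..<n} - set zs) = l" using ln by (simp add: card_Diff_subset j_def)
    then show ?thesis by (simp add: card_DL fact_prod)
  qed
  have "card {xs\<in>DL n {..<n}. set (drop l xs) \<subseteq> Q} = card ?S"
    unfolding eq by (rule card_image[OF inj])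
  also have "\<dots> = (\<Sum>zs\<in>DL j Q. card (DL l ({..<n} - set zs)))"
    by (rule card_SigmaI) (auto intro: fin finite_DL)
  also have "\<dots> = card (DL j Q) * fact l" using c2 by simp
  finally show ?thesis using card_DL[OF fQ, of j] by (simp add: j_def)
qed

lemma count_suffix: assumes c: "length c = n" and ln: "l \<le> n"
  shows "card {\<sigma>\<in>perms n. \<forall>t\<in>{l..<n}. c!(\<sigma> t) = p}
    = (if n - l \<le> card {t. t < n \<and> c!t = p}
       then fact l * \<Prod>{card {t. t < n \<and> c!t = p} - (n - l) + 1 .. card {t. t < n \<and> c!t = p}} else 0)"
proof -
  let ?L = "\<lambda>\<sigma>. map \<sigma> [0..<n]"
  let ?Q = "{t. t < n \<and> c!t = p}"
  let ?S = "{\<sigma>\<in>perms n. \<forall>t\<in>{l..<n}. c!(\<sigma> t) = p}"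
  have b: "inj_on ?L (perms n)" "?L ` perms n = DL n {..<n}"
    using perm_list_bij[of n] unfolding bij_betw_def by auto
  have iff: "(\<forall>t\<in>{l..<n}. c!(\<sigma> t) = p) \<longleftrightarrow> set (drop l (?L \<sigma>)) \<subseteq> ?Q" if "\<sigma> \<in> perms n" for \<sigma>
  proof -
    have "set (drop l (?L \<sigma>)) = \<sigma> ` {l..<n}" using ln by (simp add: drop_map)
    moreover have "\<sigma> t < n" if "t < n" for t
      using permutes_in_image[of \<sigma> "{..<n}" t] \<open>\<sigma> \<in> perms n\<close> that by (simp add: perms_def)
    ultimately show ?thesis by auto
  qed
  have img: "?L ` ?S = {xs\<in>DL n {..<n}. set (drop l xs) \<subseteq> ?Q}"
  proof
    show "?L ` ?S \<subseteq> {xs\<in>DL n {..<n}. set (drop l xs) \<subseteq> ?Q}"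
      using iff b(2) by auto
    show "{xs\<in>DL n {..<n}. set (drop l xs) \<subseteq> ?Q} \<subseteq> ?L ` ?S"
    proof clarify
      fix xs assume xs: "xs \<in> DL n {..<n}" "set (drop l xs) \<subseteq> ?Q"
      then obtain \<sigma> where s: "\<sigma> \<in> perms n" "xs = ?L \<sigma>" using b(2) by blast
      then have "\<sigma> \<in> ?S" using iff[OF s(1)] xs(2) by simp
      then show "xs \<in> ?L ` ?S" using s(2) by blast
    qed
  qed
  have inj: "inj_on ?L ?S" by (rule inj_on_subset[OF b(1)]) auto
  have "card ?S = card (?L ` ?S)" by (rule card_image[OF inj, symmetric])
  also have "\<dots> = card {xs\<in>DL n {..<n}. set (drop l xs) \<subseteq> ?Q}" by (simp only: img)
  also have "\<dots> = (if n - l \<le> card ?Q then fact l * \<Prod>{card ?Q - (n - l) + 1 .. card ?Q} else 0)"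
    by (rule card_split) (use ln in auto)
  finally show ?thesis .
qed

lemma count_front: assumes c: "length c = n" and n: "n \<ge> 1"
  shows "card {\<sigma>\<in>perms n. c!(\<sigma> 0) = p} = card {t. t < n \<and> c!t = p} * fact (n - 1)"
proof -
  define \<tau> where "\<tau> = Transposition.transpose 0 (n - 1)"
  have tp: "\<tau> \<in> perms n" using n by (simp add: \<tau>_def perms_def permutes_swap_id)
  have tt: "\<tau> \<circ> \<tau> = id" by (simp add: \<tau>_def)
  have "bij_betw (\<lambda>\<sigma>. \<sigma> \<circ> \<tau>) {\<sigma>\<in>perms n. c!(\<sigma> 0) = p} {\<sigma>\<in>perms n. \<forall>t\<in>{n-1..<n}. c!(\<sigma> t) = p}"
  proof (rule bij_betw_byWitness[where f'="\<lambda>\<sigma>. \<sigma> \<circ> \<tau>"])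
    show "\<forall>a\<in>{\<sigma> \<in> perms n. c ! \<sigma> 0 = p}. a \<circ> \<tau> \<circ> \<tau> = a" using tt by (simp add: o_assoc[symmetric])
    show "\<forall>a\<in>{\<sigma> \<in> perms n. \<forall>t\<in>{n - 1..<n}. c ! \<sigma> t = p}. a \<circ> \<tau> \<circ> \<tau> = a"
      using tt by (simp add: o_assoc[symmetric])
    have e: "{n - 1..<n} = {n - 1}" using n by auto
    show "(\<lambda>\<sigma>. \<sigma> \<circ> \<tau>) ` {\<sigma> \<in> perms n. c ! \<sigma> 0 = p} \<subseteq> {\<sigma> \<in> perms n. \<forall>t\<in>{n - 1..<n}. c ! \<sigma> t = p}"
      using comp_perms[OF tp] unfolding e by (auto simp: \<tau>_def)
    show "(\<lambda>\<sigma>. \<sigma> \<circ> \<tau>) ` {\<sigma> \<in> perms n. \<forall>t\<in>{n - 1..<n}. c ! \<sigma> t = p} \<subseteq> {\<sigma> \<in> perms n. c ! \<sigma> 0 = p}"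
      using comp_perms[OF tp] unfolding e by (auto simp: \<tau>_def)
  qed
  then have "card {\<sigma>\<in>perms n. c!(\<sigma> 0) = p} = card {\<sigma>\<in>perms n. \<forall>t\<in>{n-1..<n}. c!(\<sigma> t) = p}"
    by (rule bij_betw_same_card)
  also have "\<dots> = (if n - (n - 1) \<le> card {t. t < n \<and> c!t = p}
       then fact (n - 1) * \<Prod>{card {t. t < n \<and> c!t = p} - (n - (n - 1)) + 1 .. card {t. t < n \<and> c!t = p}} else 0)"
    by (rule count_suffix[OF c]) simp
  also have "\<dots> = card {t. t < n \<and> c!t = p} * fact (n - 1)"
  proof (cases "card {t. t < n \<and> c!t = p} = 0")
    case True then show ?thesis using n by simp
  next
    case False
    then have "1 \<le> card {t. t < n \<and> c!t = p}" by linarith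
    then show ?thesis using n by (simp add: mult.commute)
  qed
  finally show ?thesis .
qed

lemma app_mmul: "app N n (mmul N k A B) \<zeta> = app N k A (app N n B \<zeta>)"
  unfolding app_def mmul_def
  by (rule ext) (simp add: sum_distrib_left sum_distrib_right mult.assoc sum.swap[of _ "idx N n"])

lemma prod_split: "(l::nat) \<le> n \<Longrightarrow> (\<Prod>t<n. f t) = (\<Prod>t<l. f t) * (\<Prod>t\<in>{l..<n}. (f t :: complex))"
  using prod.atLeastLessThan_concat[of 0 l n f] by (simp add: atLeast0LessThan)

lemma PL_drop: assumes "length a = n" "l \<le> n"
  shows "prod_list (map u (drop l a)) = (\<Prod>t\<in>{l..<n}. (u (a!t) :: complex))"
proof -
  have "prod_list (map u (drop l a)) = (\<Prod>t<n - l. u (a!(t + l)))"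
    unfolding prod_list_map_nth using assms by (simp add: add.commute)
  also have "\<dots> = (\<Prod>t\<in>{0 + l..<(n - l) + l}. u (a!t))"
    by (simp only: prod.shift_bounds_nat_ivl atLeast0LessThan)
  also have "\<dots> = (\<Prod>t\<in>{l..<n}. u (a!t))" using assms by simp
  finally show ?thesis .
qed

lemma take_eq_iff: "length a = n \<Longrightarrow> length b = n \<Longrightarrow> l \<le> n \<Longrightarrow>
   take l a = take l b \<longleftrightarrow> (\<forall>t<l. a!t = b!t)"
  by (simp add: list_eq_iff_nth_eq)

lemma sum_ind_card: "finite A \<Longrightarrow> (\<Sum>x\<in>A. if P x then (c::complex) else 0) = of_nat (card {x\<in>A. P x}) * c"
  by (simp add: sum.inter_filter[symmetric])

lemma app_scale: "app N n (\<lambda>a b. s * M a b) \<zeta> = (\<lambda>a. s * app N n M \<zeta> a)"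
  by (simp add: app_def sum_distrib_left mult.assoc)

lemma cr_app: "app N m (creation N m u) \<phi> a
   = of_real (sqrt (real (Suc m))) * app N (Suc m) (sym_proj N (Suc m)) (\<lambda>b. u (hd b) * \<phi> (tl b)) a"
proof -
  have "app N m (creation N m u) \<phi> a
      = of_real (sqrt (real (Suc m))) * (\<Sum>c\<in>idx N m. \<Sum>i<N. sym_proj N (Suc m) a (i # c) * u i * \<phi> c)"
    by (simp add: app_def creation_def sum_distrib_left sum_distrib_right mult.assoc)
  also have "(\<Sum>c\<in>idx N m. \<Sum>i<N. sym_proj N (Suc m) a (i # c) * u i * \<phi> c)
      = (\<Sum>i<N. \<Sum>c\<in>idx N m. sym_proj N (Suc m) a (i # c) * (u (hd (i#c)) * \<phi> (tl (i#c))))"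
    by (subst sum.swap) (simp add: mult.assoc)
  also have "\<dots> = app N (Suc m) (sym_proj N (Suc m)) (\<lambda>b. u (hd b) * \<phi> (tl b)) a"
    unfolding app_def sum_idx_Suc ..
  finally show ?thesis .
qed

lemma ann_sym: assumes z: "symt N (Suc m) \<zeta>"
  shows "app N (Suc m) (annihilation N m u) \<zeta> c = of_real (sqrt (real (Suc m))) * (\<Sum>i<N. cnj (u i) * \<zeta> (i # c))"
proof -
  have "app N (Suc m) (annihilation N m u) \<zeta> c
     = (\<Sum>b\<in>idx N (Suc m). of_real (sqrt (real (Suc m))) * (\<Sum>i<N. sym_proj N (Suc m) (i # c) b * cnj (u i)) * \<zeta> b)"
    by (simp add: app_def annihilation_def creation_def sym_proj_cnj)
  also have "\<dots> = of_real (sqrt (real (Suc m))) * (\<Sum>i<N. cnj (u i) * (\<Sum>b\<in>idx N (Suc m). sym_proj N (Suc m) (i # c) b * \<zeta> b))"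
    by (simp add: sum_distrib_left sum_distrib_right mult_ac sum.swap[of _ "idx N (Suc m)"])
  also have "\<dots> = of_real (sqrt (real (Suc m))) * (\<Sum>i<N. cnj (u i) * \<zeta> (i # c))"
  proof -
    have "(\<Sum>b\<in>idx N (Suc m). sym_proj N (Suc m) (i # c) b * \<zeta> b) = \<zeta> (i # c)" for i
      using fun_cong[OF symt_P[OF z], of "i # c"] by (simp add: app_def)
    then show ?thesis by simp
  qed
  finally show ?thesis .
qed

lemma K_eq: assumes "j \<le> m"
  shows "(fact l * fact m / fact (m - j) :: real) = of_nat (fact l * \<Prod>{m - j + 1..m})"
proof -
  have "(fact m :: nat) = fact (m - j) * \<Prod>{Suc (m - j)..m}"
    by (rule fact_eq_fact_times) simp
  then have "(fact m :: real) = fact (m - j) * of_nat (\<Prod>{Suc (m - j)..m})"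
    by (metis of_nat_fact of_nat_mult)
  then show ?thesis by simp
qed

lemma symt_scale: "symt N n \<zeta> \<Longrightarrow> symt N n (\<lambda>a. s * \<zeta> a)"
  by (simp add: symt_def)

lemma number_formula: "app N (Suc m) (number_op N (Suc m) u) \<zeta> = (\<lambda>a. of_real (sqrt (real (Suc m))) *
   app N (Suc m) (sym_proj N (Suc m)) (\<lambda>b. u (hd b) * app N (Suc m) (annihilation N m u) \<zeta> (tl b)) a)"
proof -
  have "app N (Suc m) (number_op N (Suc m) u) \<zeta> = app N m (creation N m u) (app N (Suc m) (annihilation N m u) \<zeta>)"
    unfolding number_op.simps by (rule app_mmul)
  also have "\<dots> = (\<lambda>a. of_real (sqrt (real (Suc m))) *
   app N (Suc m) (sym_proj N (Suc m)) (\<lambda>b. u (hd b) * app N (Suc m) (annihilation N m u) \<zeta> (tl b)) a)"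
    by (rule ext, rule cr_app)
  finally show ?thesis .
qed

lemma number_symt: "symt N n (app N n (number_op N n u) \<zeta>)"
proof (cases n)
  case 0 then show ?thesis by (simp add: symt_def app_def)
next
  case (Suc m) then show ?thesis unfolding Suc number_formula by (intro symt_scale P_symt)
qed

lemma T_formula: "app N (j + l) (T_op N j l \<Gamma>) \<zeta> = (\<lambda>a. (of_nat (fact (j + l)) / of_nat (fact j)) *
   app N (j + l) (sym_proj N (j + l)) (app N (j + l) (id_tensor l \<Gamma>) (app N (j + l) (sym_proj N (j + l)) \<zeta>)) a)"
  unfolding T_op_def app_scale by (simp add: app_mmul)

lemma T_symt: "symt N (j + l) (app N (j + l) (T_op N j l \<Gamma>) \<zeta>)"
  unfolding T_formula by (intro symt_scale P_symt)

lemma sum_fun_apply: "(\<Sum>x\<in>A. f x) a = (\<Sum>x\<in>A. f x a)"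
  by (induction A rule: infinite_finite_induct) auto

lemma lagrange: assumes fin: "finite Sp" and x: "x \<in> Sp"
  shows "poly (\<Sum>c\<in>Sp. smult (f c) (\<Prod>\<mu>\<in>Sp - {c}. smult (1 / (c - \<mu>)) [:- \<mu>, 1:])) x = (f x :: complex)"
proof -
  have P: "poly (\<Sum>c\<in>Sp. smult (f c) (\<Prod>\<mu>\<in>Sp - {c}. smult (1 / (c - \<mu>)) [:- \<mu>, 1:])) x
      = (\<Sum>c\<in>Sp. f c * (\<Prod>\<mu>\<in>Sp - {c}. (1 / (c - \<mu>)) * (x - \<mu>)))"
    by (simp add: poly_sum poly_prod diff_divide_distrib)
  have z: "(\<Prod>\<mu>\<in>Sp - {c}. (1 / (c - \<mu>)) * (x - \<mu>)) = 0" if "c \<in> Sp" "c \<noteq> x" for c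
    using fin x that by (simp add: prod_zero_iff) (rule bexI[of _ x], auto)
  have o: "(\<Prod>\<mu>\<in>Sp - {x}. (1 / (x - \<mu>)) * (x - \<mu>)) = 1"
    by (rule prod.neutral) auto
  have "(\<Sum>c\<in>Sp. f c * (\<Prod>\<mu>\<in>Sp - {c}. (1 / (c - \<mu>)) * (x - \<mu>)))
     = f x * (\<Prod>\<mu>\<in>Sp - {x}. (1 / (x - \<mu>)) * (x - \<mu>)) + (\<Sum>c\<in>Sp - {x}. f c * (\<Prod>\<mu>\<in>Sp - {c}. (1 / (c - \<mu>)) * (x - \<mu>)))"
    by (rule sum.remove[OF fin x])
  also have "(\<Sum>c\<in>Sp - {x}. f c * (\<Prod>\<mu>\<in>Sp - {c}. (1 / (c - \<mu>)) * (x - \<mu>))) = 0"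
    by (rule sum.neutral) (use z in auto)
  finally show ?thesis using P o by simp
qed

lemma nat_ext_nat: "nat_ext g (of_nat m) = of_real (g m)"
  by (simp add: nat_ext_def)

lemma app_id_op: assumes z: "\<forall>a. a \<notin> idx N n \<longrightarrow> \<zeta> a = 0" shows "app N n (id_op N n) \<zeta> = \<zeta>"
proof
  fix x
  have "app N n (id_op N n) \<zeta> x = (\<Sum>b\<in>idx N n. if b = x then (if x \<in> idx N n then \<zeta> b else 0) else 0)"
    unfolding app_def id_op_def by (intro sum.cong refl) auto
  also have "\<dots> = \<zeta> x" using z by (cases "x \<in> idx N n") auto
  finally show "app N n (id_op N n) \<zeta> x = \<zeta> x" .
qed

lemma app_poly_op: "app N n (poly_op N n L A) \<zeta> = (\<lambda>a. \<Sum>i\<le>degree L. coeff L i * app N n (op_pow N n A i) \<zeta> a)"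
  by (rule ext) (simp add: app_def poly_op_def sum_distrib_left sum_distrib_right mult.assoc sum.swap[of _ "idx N n"])

lemma f_pos: "j \<le> m \<Longrightarrow> f_ell j l m > 0"
  by (simp add: f_ell_def)

lemma f_nonneg: "f_ell j l m \<ge> 0"
  by (simp add: f_ell_def)

lemma f_step: assumes "j \<le> m"
  shows "f_ell j l (Suc m) = f_ell j l m * (real (Suc m) / real (Suc m - j))"
proof -
  have e: "Suc m - j = Suc (m - j)" using assms by simp
  have A: "(fact (Suc m) :: real) = real (Suc m) * fact m" by (rule fact_Suc)
  have B: "(fact (Suc m - j) :: real) = real (Suc m - j) * fact (m - j)" unfolding e by (rule fact_Suc)
  have "f_ell j l (Suc m) = fact l * (real (Suc m) * fact m) / (real (Suc m - j) * fact (m - j))"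
    using assms unfolding f_ell_def A B by simp
  also have "\<dots> = (fact l * fact m / fact (m - j)) * (real (Suc m) / real (Suc m - j))"
    by (simp add: divide_inverse mult_ac)
  also have "\<dots> = f_ell j l m * (real (Suc m) / real (Suc m - j))"
    using assms by (simp add: f_ell_def)
  finally show ?thesis .
qed

lemma f_le_Suc: "f_ell j l m \<le> f_ell j l (Suc m)"
proof (cases "j \<le> m")
  case True
  have "real (Suc m - j) \<le> real (Suc m)" by simp
  moreover have "real (Suc m - j) > 0" using True by simp
  ultimately have "real (Suc m) / real (Suc m - j) \<ge> 1" by simp
  then have "f_ell j l m * 1 \<le> f_ell j l m * (real (Suc m) / real (Suc m - j))"
    by (intro mult_left_mono f_nonneg)
  then show ?thesis using f_step[OF True] by simp
next
  case False
  then have "f_ell j l m = 0" by (simp add: f_ell_def)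
  then show ?thesis using f_nonneg[of j l "Suc m"] by simp
qed

lemma f_mono: "mono (f_ell j l)"
  unfolding mono_iff_le_Suc using f_le_Suc by blast

lemma f_lt_Suc: assumes "1 \<le> j" "j \<le> m" shows "f_ell j l m < f_ell j l (Suc m)"
proof -
  have "real (Suc m - j) < real (Suc m)" using assms by simp
  moreover have "real (Suc m - j) > 0" using assms by simp
  ultimately have "real (Suc m) / real (Suc m - j) > 1" by simp
  then have "f_ell j l m * 1 < f_ell j l m * (real (Suc m) / real (Suc m - j))"
    by (intro mult_strict_left_mono f_pos assms)
  then show ?thesis using f_step[OF assms(2)] by simp
qed

lemma f_strict: assumes "1 \<le> j" "j \<le> m" shows "f_ell j l m < f_ell j l (m + Suc d)"
proof (induction d)
  case 0 then show ?case using f_lt_Suc[OF assms] by simp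
next
  case (Suc d)
  have "f_ell j l (m + Suc d) < f_ell j l (Suc (m + Suc d))" by (rule f_lt_Suc) (use assms in auto)
  then show ?case using Suc.IH by simp
qed

lemma f_inj: assumes "1 \<le> j" "j \<le> m" "f_ell j l m' = f_ell j l m" shows "m' = m"
proof (rule ccontr)
  assume ne: "m' \<noteq> m"
  show False
  proof (cases "j \<le> m'")
    case False
    then have "f_ell j l m' = 0" by (simp add: f_ell_def)
    then show False using f_pos[OF assms(2), of l] assms(3) by simp
  next
    case jm': True
    show False
    proof (cases "m < m'")
      case True
      from less_imp_Suc_add[OF True] obtain d where d: "m' = m + Suc d" by auto
      have "f_ell j l m < f_ell j l (m + Suc d)" by (rule f_strict[OF assms(1,2)])
      then show False using assms(3) d by simp
    next
      case False
      then have "m' < m" using ne by simp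
      from less_imp_Suc_add[OF this] obtain d where d: "m = m' + Suc d" by auto
      have "f_ell j l m' < f_ell j l (m' + Suc d)" by (rule f_strict[OF assms(1) jm'])
      then show False using assms(3) d by simp
    qed
  qed
qed

lemma val_eq: assumes "M \<le> m"
  shows "(of_real (f_ell M k m) / of_nat (fact M) :: complex) = of_real (fact k * fact m / (fact M * fact (m - M)))"
proof -
  have "(fact k * fact m / (fact M * fact (m - M)) :: real) = (fact k * fact m / fact (m - M)) / fact M"
    by (simp add: divide_inverse mult_ac)
  then show ?thesis using assms by (simp add: f_ell_def)
qed

lemma vs_tensor: "vector_space tensor_scale"
  by unfold_locales (simp_all add: tensor_scale_def fun_eq_iff algebra_simps)

lemma app_lin: "app N n A (\<lambda>a. \<Sum>c\<in>I. f c * X c a) = (\<lambda>a. \<Sum>c\<in>I. f c * app N n A (X c) a)"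
  by (rule ext) (simp add: app_def sum_distrib_left mult_ac sum.swap[of _ I])

locale ubasis =
  fixes N :: nat and u :: "nat \<Rightarrow> complex" and p :: nat
  assumes pN: "p < N" and up: "u p \<noteq> 0" and unit: "unit_vec N u"
begin

definition Bv :: "nat \<Rightarrow> nat \<Rightarrow> complex" where
  "Bv i k = (if i = p then u k else (if k = i then 1 else 0) - (if k = p then cnj (u i) / cnj (u p) else 0))"

definition Dv :: "nat \<Rightarrow> nat \<Rightarrow> complex" where
  "Dv i k = (if i = p then cnj (u k) else (if k = i then 1 else 0) - u i * cnj (u k))"

lemma norm1: "(\<Sum>k<N. cnj (u k) * u k) = 1"
proof -
  have "(\<Sum>k<N. cnj (u k) * u k) = (\<Sum>k<N. complex_of_real ((cmod (u k))\<^sup>2))"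
    by (intro sum.cong refl) (use complex_norm_square in \<open>simp add: mult.commute\<close>)
  also have "\<dots> = 1" using unit unfolding unit_vec_def by (metis of_real_1 of_real_sum)
  finally show ?thesis .
qed

lemma norm1': "(\<Sum>k<N. u k * cnj (u k)) = 1"
  using norm1 by (simp add: mult.commute)

lemma cup: "cnj (u p) \<noteq> 0" using up by simp

lemma DB: assumes "i < N" "i' < N"
  shows "(\<Sum>k<N. Dv i k * Bv i' k) = (if i = i' then 1 else 0)"
proof (cases "i = p")
  case ip: True
  show ?thesis
  proof (cases "i' = p")
    case True then show ?thesis using ip norm1 by (simp add: Dv_def Bv_def)
  next
    case False
    have "(\<Sum>k<N. Dv i k * Bv i' k) = (\<Sum>k<N. (if k = i' then 1 else 0) * cnj (u k))
        - (\<Sum>k<N. (if k = p then 1 else 0) * (cnj (u k) * (cnj (u i') / cnj (u p))))"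
      unfolding sum_subtractf[symmetric] using ip False by (intro sum.cong refl) (auto simp: Dv_def Bv_def)
    also have "\<dots> = 0" using assms pN cup by (simp only: sum_delta_lt) simp
    finally show ?thesis using ip False by simp
  qed
next
  case inp: False
  show ?thesis
  proof (cases "i' = p")
    case True
    have "(\<Sum>k<N. Dv i k * Bv i' k) = (\<Sum>k<N. (if k = i then 1 else 0) * u k)
        - u i * (\<Sum>k<N. cnj (u k) * u k)"
      using inp True by (simp add: Dv_def Bv_def sum_subtractf[symmetric] sum_distrib_left algebra_simps)
    also have "\<dots> = 0" using assms norm1 by (simp only: sum_delta_lt) simp
    finally show ?thesis using inp True by simp
  next
    case False
    define c where "c = cnj (u i') / cnj (u p)"
    have "(\<Sum>k<N. Dv i k * Bv i' k) = (\<Sum>k<N. ((if k = i then 1 else 0) - u i * cnj (u k))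
           * ((if k = i' then 1 else 0) - (if k = p then 1 else 0) * c))"
      using inp False by (intro sum.cong refl) (simp add: Dv_def Bv_def c_def)
    also have "\<dots> = (\<Sum>k<N. (if k = i then 1 else 0) * (if k = i' then 1 else 0))
        - (\<Sum>k<N. (if k = i then 1 else 0) * (if k = p then 1 else 0)) * c
        - u i * (\<Sum>k<N. (if k = i' then 1 else 0) * cnj (u k))
        + u i * c * (\<Sum>k<N. (if k = p then 1 else 0) * cnj (u k))"
      by (simp add: algebra_simps sum_subtractf sum.distrib sum_distrib_left sum_distrib_right)
    also have "\<dots> = (if i = i' then 1 else 0)"
      using assms pN inp cup by (simp only: sum_delta_lt) (simp add: c_def)
    finally show ?thesis .
  qed
qed

lemma BD: assumes "k < N" "k' < N"
  shows "(\<Sum>i<N. Bv i k * Dv i k') = (if k = k' then 1 else 0)"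
proof -
  have fin: "finite {..<N}" by simp
  have split: "(\<Sum>i<N. Bv i k * Dv i k') = Bv p k * Dv p k' + (\<Sum>i\<in>{..<N}-{p}. Bv i k * Dv i k')"
    using sum.remove[OF fin, of p] pN by simp
  have S: "(\<Sum>i\<in>{..<N}-{p}. cnj (u i) * u i) = 1 - cnj (u p) * u p"
    using sum.remove[OF fin, of p "\<lambda>i. cnj (u i) * u i"] pN norm1 by (simp add: algebra_simps)
  show ?thesis
  proof (cases "k = p")
    case kp: False
    have "(\<Sum>i\<in>{..<N}-{p}. Bv i k * Dv i k') = (\<Sum>i\<in>{..<N}-{p}. if i = k then Dv i k' else 0)"
      by (intro sum.cong refl) (auto simp: Bv_def kp)
    also have "\<dots> = Dv k k'" using assms kp by simp
    finally show ?thesis using split kp by (simp add: Bv_def Dv_def)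
  next
    case kp: True
    have "(\<Sum>i\<in>{..<N}-{p}. Bv i k * Dv i k') = (\<Sum>i\<in>{..<N}-{p}.
        - (cnj (u i) / cnj (u p)) * ((if k' = i then 1 else 0) - u i * cnj (u k')))"
      by (intro sum.cong refl) (auto simp: Bv_def Dv_def kp)
    also have "\<dots> = - (\<Sum>i\<in>{..<N}-{p}. (if i = k' then 1 else 0) * (cnj (u i) / cnj (u p)))
          + cnj (u k') / cnj (u p) * (\<Sum>i\<in>{..<N}-{p}. cnj (u i) * u i)"
      by (simp add: algebra_simps sum_subtractf sum.distrib sum_distrib_left sum_distrib_right sum_negf)
         (intro sum.cong refl, auto)
    also have "(\<Sum>i\<in>{..<N}-{p}. (if i = k' then 1 else 0) * (cnj (u i) / cnj (u p)))
        = (\<Sum>i\<in>{..<N}-{p}. if i = k' then cnj (u i) / cnj (u p) else 0)"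
      by (intro sum.cong refl) auto
    also have "\<dots> = (if k' \<noteq> p then cnj (u k') / cnj (u p) else 0)"
      using assms by simp
    finally have "(\<Sum>i\<in>{..<N}-{p}. Bv i k * Dv i k') = - (if k' \<noteq> p then cnj (u k') / cnj (u p) else 0)
          + cnj (u k') / cnj (u p) * (1 - cnj (u p) * u p)" (is "_ = ?X") using S by simp
    moreover have e: "Bv p k * Dv p k' = u p * cnj (u k')" by (simp add: Bv_def Dv_def kp)
    ultimately have "(\<Sum>i<N. Bv i k * Dv i k') = u p * cnj (u k') + ?X" using split by simp
    then show ?thesis using cup kp by (cases "k' = p") (auto simp: field_simps)
  qed
qed


definition Dt :: "nat list \<Rightarrow> nat list \<Rightarrow> complex" where
  "Dt c a = (\<Prod>t<length c. Dv (c!t) (a!t))"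

definition Bt :: "nat list \<Rightarrow> tensor" where
  "Bt c a = (if a \<in> idx N (length c) then \<Prod>t<length c. Bv (c!t) (a!t) else 0)"

definition phi :: "nat list \<Rightarrow> tensor \<Rightarrow> complex" where
  "phi c \<zeta> = (\<Sum>a\<in>idx N (length c). Dt c a * \<zeta> a)"

lemma idx_nth: "a \<in> idx N n \<Longrightarrow> t < n \<Longrightarrow> a!t < N"
  unfolding idx_def using nth_mem by fastforce

lemma T1: assumes c: "c \<in> idx N n" and c': "c' \<in> idx N n"
  shows "phi c' (Bt c) = (if c' = c then 1 else 0)"
proof -
  have l: "length c = n" "length c' = n" using c c' by (auto simp: idx_def)
  have "phi c' (Bt c) = (\<Sum>a\<in>idx N n. \<Prod>t<n. Dv (c'!t) (a!t) * Bv (c!t) (a!t))"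
    unfolding phi_def Dt_def Bt_def l by (intro sum.cong refl) (simp add: prod.distrib)
  also have "\<dots> = (\<Prod>t<n. \<Sum>k<N. Dv (c'!t) k * Bv (c!t) k)" by (rule sum_idx_prod)
  also have "\<dots> = (\<Prod>t<n. if c'!t = c!t then 1 else 0)"
    by (intro prod.cong refl) (simp add: DB idx_nth[OF c] idx_nth[OF c'])
  also have "\<dots> = (if c' = c then 1 else 0)"
    unfolding prod_delta using l by (simp add: list_eq_iff_nth_eq)
  finally show ?thesis .
qed

lemma T2: assumes a: "a \<in> idx N n" and a': "a' \<in> idx N n"
  shows "(\<Sum>c\<in>idx N n. Bt c a * Dt c a') = (if a = a' then 1 else 0)"
proof -
  have l: "length a = n" "length a' = n" using a a' by (auto simp: idx_def)
  have "(\<Sum>c\<in>idx N n. Bt c a * Dt c a') = (\<Sum>c\<in>idx N n. \<Prod>t<n. Bv (c!t) (a!t) * Dv (c!t) (a'!t))"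
    unfolding Dt_def Bt_def by (intro sum.cong refl) (simp add: prod.distrib idx_len a)
  also have "\<dots> = (\<Prod>t<n. \<Sum>k<N. Bv k (a!t) * Dv k (a'!t))" by (rule sum_idx_prod)
  also have "\<dots> = (\<Prod>t<n. if a!t = a'!t then 1 else 0)"
    by (intro prod.cong refl) (simp add: BD idx_nth[OF a] idx_nth[OF a'])
  also have "\<dots> = (if a = a' then 1 else 0)"
    unfolding prod_delta using l by (simp add: list_eq_iff_nth_eq)
  finally show ?thesis .
qed

definition supp :: "nat \<Rightarrow> tensor \<Rightarrow> bool" where
  "supp n \<zeta> \<longleftrightarrow> (\<forall>a. a \<notin> idx N n \<longrightarrow> \<zeta> a = 0)"

lemma expansion: assumes "supp n \<zeta>"
  shows "\<zeta> a = (\<Sum>c\<in>idx N n. phi c \<zeta> * Bt c a)"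
proof (cases "a \<in> idx N n")
  case True
  have "(\<Sum>c\<in>idx N n. phi c \<zeta> * Bt c a) = (\<Sum>c\<in>idx N n. \<Sum>a'\<in>idx N n. \<zeta> a' * (Bt c a * Dt c a'))"
    unfolding phi_def sum_distrib_right by (intro sum.cong refl) (simp_all add: mult_ac idx_len)
  also have "\<dots> = (\<Sum>a'\<in>idx N n. \<zeta> a' * (\<Sum>c\<in>idx N n. Bt c a * Dt c a'))"
    by (subst sum.swap) (simp add: sum_distrib_left)
  also have "\<dots> = (\<Sum>a'\<in>idx N n. \<zeta> a' * (if a = a' then 1 else 0))"
    by (intro sum.cong refl) (simp add: T2 True)
  also have "\<dots> = \<zeta> a" using True by (simp add: if_distrib cong: if_cong)
  finally show ?thesis by simp
next
  case False
  then have "\<And>c. c \<in> idx N n \<Longrightarrow> Bt c a = 0" by (simp add: Bt_def idx_len)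
  then show ?thesis using assms False by (simp add: supp_def)
qed

lemma zero_crit: assumes "supp n \<zeta>" "\<And>c. c \<in> idx N n \<Longrightarrow> phi c \<zeta> = 0"
  shows "\<zeta> = 0"
proof
  fix a show "\<zeta> a = 0 a" using expansion[OF assms(1), of a] assms(2) by simp
qed

lemma Dt_perm: assumes s: "\<sigma> \<in> perms n" and "length c = n" "length a = n"
  shows "Dt (permute_list \<sigma> c) (permute_list \<sigma> a) = Dt c a"
proof -
  have sp: "\<sigma> permutes {..<n}" using s by (simp add: perms_def)
  have "Dt (permute_list \<sigma> c) (permute_list \<sigma> a) = (\<Prod>t<n. Dv (c!(\<sigma> t)) (a!(\<sigma> t)))"
    unfolding Dt_def using assms sp by (intro prod.cong) (auto simp: permute_list_nth)
  also have "\<dots> = (\<Prod>t<n. Dv (c!t) (a!t))"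
    using prod.permute[OF sp, of "\<lambda>t. Dv (c!t) (a!t)"] by (simp add: comp_def)
  finally show ?thesis using assms by (simp add: Dt_def)
qed

lemma reindex_pl: assumes s: "\<sigma> \<in> perms n" and d: "length d = n"
  shows "(\<Sum>a\<in>idx N n. Dt d (permute_list \<sigma> a) * \<zeta> (permute_list \<sigma> a)) = phi d \<zeta>"
  unfolding phi_def d using sum.reindex_bij_betw[OF pl_bij[OF s], of "\<lambda>a. Dt d a * \<zeta> a"] .

lemma phi_perm: assumes s: "\<sigma> \<in> perms n" and c: "c \<in> idx N n"
  shows "(\<Sum>a\<in>idx N n. Dt c a * \<zeta> (permute_list \<sigma> a)) = phi (permute_list \<sigma> c) \<zeta>"
proof -
  have "(\<Sum>a\<in>idx N n. Dt c a * \<zeta> (permute_list \<sigma> a))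
      = (\<Sum>a\<in>idx N n. Dt (permute_list \<sigma> c) (permute_list \<sigma> a) * \<zeta> (permute_list \<sigma> a))"
  proof (intro sum.cong refl)
    fix a assume "a \<in> idx N n"
    then show "Dt c a * \<zeta> (permute_list \<sigma> a) = Dt (permute_list \<sigma> c) (permute_list \<sigma> a) * \<zeta> (permute_list \<sigma> a)"
      using Dt_perm[OF s idx_len[OF c] idx_len] by simp
  qed
  also have "\<dots> = phi (permute_list \<sigma> c) \<zeta>" by (rule reindex_pl[OF s]) (simp add: idx_len[OF c])
  finally show ?thesis .
qed

lemma phi_sym: assumes "symt N n \<zeta>" "\<sigma> \<in> perms n" "c \<in> idx N n"
  shows "phi (permute_list \<sigma> c) \<zeta> = phi c \<zeta>"
proof -
  have "phi c \<zeta> = (\<Sum>a\<in>idx N n. Dt c a * \<zeta> (permute_list \<sigma> a))"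
    unfolding phi_def using assms by (intro sum.cong) (auto simp: symt_def idx_len)
  then show ?thesis using phi_perm[OF assms(2,3)] by simp
qed

lemma phi_P: assumes c: "c \<in> idx N n"
  shows "phi c (app N n (sym_proj N n) \<zeta>) = (\<Sum>\<sigma>\<in>perms n. phi (permute_list \<sigma> c) \<zeta>) / of_nat (fact n)"
proof -
  have "phi c (app N n (sym_proj N n) \<zeta>) = (\<Sum>a\<in>idx N n. Dt c a * ((\<Sum>\<sigma>\<in>perms n. \<zeta> (permute_list \<sigma> a)) / of_nat (fact n)))"
    unfolding phi_def using c by (intro sum.cong) (auto simp: P_app idx_len)
  also have "\<dots> = (\<Sum>\<sigma>\<in>perms n. \<Sum>a\<in>idx N n. Dt c a * \<zeta> (permute_list \<sigma> a)) / of_nat (fact n)"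
    by (simp add: sum_distrib_left sum_divide_distrib sum.swap[of _ "idx N n"])
  also have "\<dots> = (\<Sum>\<sigma>\<in>perms n. phi (permute_list \<sigma> c) \<zeta>) / of_nat (fact n)"
    using phi_perm[OF _ c] by simp
  finally show ?thesis .
qed


lemma Bv_p: "Bv p k = u k" by (simp add: Bv_def)

lemma Dv_p: "Dv p k = cnj (u k)" by (simp add: Dv_def)

lemma Dv_u: "i < N \<Longrightarrow> (\<Sum>k<N. Dv i k * u k) = (if i = p then 1 else 0)"
  using DB[of i p] pN by (simp add: Bv_p)

lemma row_Gamma: assumes d: "d \<in> idx N n" and b: "b \<in> idx N n" and ln: "l \<le> n"
  shows "(\<Sum>a\<in>idx N n. Dt d a * id_tensor l (proj_pow u) a b)
       = (if \<forall>t\<in>{l..<n}. d!t = p then Dt d b else 0)"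
proof -
  define C where "C = cnj (prod_list (map u (drop l b)))"
  define g where "g t k = Dv (d!t) k * (if t < l then (if k = b!t then 1 else 0) else u k)" for t k
  have lb: "length b = n" and ld: "length d = n" using b d by (auto simp: idx_len)
  have step1: "Dt d a * id_tensor l (proj_pow u) a b = (\<Prod>t<n. g t (a!t)) * C" if a: "a \<in> idx N n" for a
  proof -
    have la: "length a = n" using a by (simp add: idx_len)
    have "(\<Prod>t<n. (if t < l then (if a!t = b!t then 1 else 0) else u (a!t)))
        = (\<Prod>t<l. (if a!t = b!t then 1 else 0)) * (\<Prod>t\<in>{l..<n}. u (a!t))"
      using prod_split[OF ln, of "\<lambda>t. (if t < l then (if a!t = b!t then 1 else 0) else u (a!t))"] by simp
    also have "\<dots> = (if take l a = take l b then prod_list (map u (drop l a)) else 0)"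
      using prod_delta[where n=l and f="\<lambda>t. a!t" and g="\<lambda>t. b!t"] take_eq_iff[OF la lb ln] PL_drop[OF la ln, of u] by auto
    finally have h: "(if take l a = take l b then prod_list (map u (drop l a)) else 0)
       = (\<Prod>t<n. (if t < l then (if a!t = b!t then 1 else 0) else u (a!t)))" by simp
    have "id_tensor l (proj_pow u) a b = (if take l a = take l b then prod_list (map u (drop l a)) else 0) * C"
      by (simp add: id_tensor_def proj_pow_def C_def)
    also have "\<dots> = (\<Prod>t<n. (if t < l then (if a!t = b!t then 1 else 0) else u (a!t))) * C" by (simp only: h)
    finally show ?thesis unfolding Dt_def ld g_def by (simp add: prod.distrib mult.assoc)
  qed
  have step2: "(\<Sum>k<N. g t k) = (if t < l then Dv (d!t) (b!t) else (if d!t = p then 1 else 0))" if t: "t < n" for t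
  proof (cases "t < l")
    case True
    then have "(\<Sum>k<N. g t k) = (\<Sum>k<N. Dv (d!t) k * (if k = b!t then 1 else 0))" by (simp add: g_def)
    also have "\<dots> = Dv (d!t) (b!t)" by (rule sum_delta_lt'[OF idx_nth[OF b t]])
    finally show ?thesis using True by simp
  next
    case False
    then have "(\<Sum>k<N. g t k) = (\<Sum>k<N. Dv (d!t) k * u k)" by (simp add: g_def)
    then show ?thesis using False Dv_u[OF idx_nth[OF d t]] by simp
  qed
  have "(\<Sum>a\<in>idx N n. Dt d a * id_tensor l (proj_pow u) a b) = (\<Sum>a\<in>idx N n. \<Prod>t<n. g t (a!t)) * C"
    using step1 by (simp add: sum_distrib_right)
  also have "\<dots> = (\<Prod>t<n. \<Sum>k<N. g t k) * C" by (simp only: sum_idx_prod)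
  also have "\<dots> = (\<Prod>t<n. (if t < l then Dv (d!t) (b!t) else (if d!t = p then 1 else 0))) * C"
    using step2 by simp
  also have "\<dots> = (\<Prod>t<l. Dv (d!t) (b!t)) * ((\<Prod>t\<in>{l..<n}. (if d!t = p then 1 else 0)) * C)"
    by (subst prod_split[OF ln]) simp
  also have "C = (\<Prod>t\<in>{l..<n}. Dv p (b!t))"
    unfolding C_def PL_drop[OF lb ln] by (simp add: Dv_p)
  also have "(\<Prod>t\<in>{l..<n}. (if d!t = p then 1 else 0)) * (\<Prod>t\<in>{l..<n}. Dv p (b!t))
     = (\<Prod>t\<in>{l..<n}. (if d!t = p then Dv (d!t) (b!t) else 0))"
    unfolding prod.distrib[symmetric] by (intro prod.cong refl) auto
  also have "(\<Prod>t\<in>{l..<n}. (if d!t = p then Dv (d!t) (b!t) else 0))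
     = (if \<forall>t\<in>{l..<n}. d!t = p then (\<Prod>t\<in>{l..<n}. Dv (d!t) (b!t)) else 0)"
    by auto
  also have "(\<Prod>t<l. Dv (d!t) (b!t)) * (if \<forall>t\<in>{l..<n}. d!t = p then (\<Prod>t\<in>{l..<n}. Dv (d!t) (b!t)) else 0)
     = (if \<forall>t\<in>{l..<n}. d!t = p then Dt d b else 0)"
    unfolding Dt_def ld using prod_split[OF ln, of "\<lambda>t. Dv (d!t) (b!t)"] by simp
  finally show ?thesis .
qed

lemma phi_Gamma: assumes d: "d \<in> idx N n" and ln: "l \<le> n"
  shows "phi d (app N n (id_tensor l (proj_pow u)) Y) = (if \<forall>t\<in>{l..<n}. d!t = p then 1 else 0) * phi d Y"
proof -
  have "phi d (app N n (id_tensor l (proj_pow u)) Y)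
     = (\<Sum>b\<in>idx N n. (\<Sum>a\<in>idx N n. Dt d a * id_tensor l (proj_pow u) a b) * Y b)"
  proof -
    have "phi d (app N n (id_tensor l (proj_pow u)) Y)
       = (\<Sum>a\<in>idx N n. \<Sum>b\<in>idx N n. Dt d a * (id_tensor l (proj_pow u) a b * Y b))"
      unfolding phi_def app_def idx_len[OF d] sum_distrib_left ..
    also have "\<dots> = (\<Sum>b\<in>idx N n. \<Sum>a\<in>idx N n. Dt d a * (id_tensor l (proj_pow u) a b * Y b))"
      by (rule sum.swap)
    also have "\<dots> = (\<Sum>b\<in>idx N n. (\<Sum>a\<in>idx N n. Dt d a * id_tensor l (proj_pow u) a b) * Y b)"
      unfolding sum_distrib_right by (simp add: mult.assoc)
    finally show ?thesis .
  qed
  also have "\<dots> = (\<Sum>b\<in>idx N n. (if \<forall>t\<in>{l..<n}. d!t = p then 1 else 0) * (Dt d b * Y b))"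
    by (intro sum.cong refl) (simp add: row_Gamma[OF d _ ln])
  also have "\<dots> = (if \<forall>t\<in>{l..<n}. d!t = p then 1 else 0) * phi d Y"
    unfolding phi_def idx_len[OF d] by (simp add: sum_distrib_left)
  finally show ?thesis .
qed


lemma phi_scale: "phi d (\<lambda>a. s * X a) = s * phi d X"
  by (simp add: phi_def sum_distrib_left mult_ac)

lemma Dt_Cons: "Dt (e0 # e') (k # c) = Dv e0 k * Dt e' c"
  unfolding Dt_def by (simp add: prod.lessThan_Suc_shift del: prod.lessThan_Suc)

lemma phi_Cons: "phi (e0 # e') X = (\<Sum>k<N. \<Sum>c\<in>idx N (length e'). Dv e0 k * Dt e' c * X (k # c))"
  unfolding phi_def by (simp add: sum_idx_Suc Dt_Cons)

lemma phi_hd: assumes e: "e \<in> idx N (Suc m)" and z: "symt N (Suc m) \<zeta>"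
  shows "phi e (\<lambda>b. u (hd b) * app N (Suc m) (annihilation N m u) \<zeta> (tl b))
     = (if e!0 = p then 1 else 0) * of_real (sqrt (real (Suc m))) * phi e \<zeta>"
proof -
  obtain e0 e' where ee: "e = e0 # e'" using e by (cases e) (auto simp: idx_def)
  have e0: "e0 < N" and le': "length e' = m" using e ee by (auto simp: idx_def)
  define s where "s = (of_real (sqrt (real (Suc m))) :: complex)"
  have "phi e (\<lambda>b. u (hd b) * app N (Suc m) (annihilation N m u) \<zeta> (tl b))
     = (\<Sum>k<N. \<Sum>c\<in>idx N m. Dv e0 k * u k * (Dt e' c * (s * (\<Sum>i<N. cnj (u i) * \<zeta> (i # c)))))"
    unfolding ee phi_Cons le' by (simp add: ann_sym[OF z] s_def mult_ac)
  also have "\<dots> = (\<Sum>k<N. Dv e0 k * u k) * (\<Sum>c\<in>idx N m. Dt e' c * (s * (\<Sum>i<N. cnj (u i) * \<zeta> (i # c))))"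
    by (rule sum_product[symmetric])
  also have "\<dots> = (if e0 = p then 1 else 0) * (s * (\<Sum>i<N. \<Sum>c\<in>idx N m. Dv p i * Dt e' c * \<zeta> (i # c)))"
  proof -
    have "(\<Sum>c\<in>idx N m. Dt e' c * (s * (\<Sum>i<N. cnj (u i) * \<zeta> (i # c))))
        = s * (\<Sum>c\<in>idx N m. \<Sum>i<N. Dv p i * Dt e' c * \<zeta> (i # c))"
      by (simp add: sum_distrib_left Dv_p mult_ac)
    also have "\<dots> = s * (\<Sum>i<N. \<Sum>c\<in>idx N m. Dv p i * Dt e' c * \<zeta> (i # c))"
      by (subst sum.swap) simp
    finally show ?thesis using Dv_u[OF e0] by simp
  qed
  also have "\<dots> = (if e!0 = p then 1 else 0) * s * phi e \<zeta>"
    unfolding ee phi_Cons le' by auto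
  finally show ?thesis by (simp add: s_def)
qed

lemma card_perm_nth: assumes d: "length d = n"
  shows "card {\<sigma>\<in>perms n. P (permute_list \<sigma> d)} = card {\<sigma>\<in>perms n. P (map (\<lambda>t. d!(\<sigma> t)) [0..<n])}"
proof -
  have "permute_list \<sigma> d = map (\<lambda>t. d!(\<sigma> t)) [0..<n]" for \<sigma>
    using d by (simp add: permute_list_def)
  then show ?thesis by simp
qed

lemma phi_number: assumes z: "symt N n \<zeta>" and d: "d \<in> idx N n" and n: "n \<ge> 1"
  shows "phi d (app N n (number_op N n u) \<zeta>) = of_nat (card {t. t < n \<and> d!t = p}) * phi d \<zeta>"
proof -
  obtain m where nm: "n = Suc m" using n by (cases n) auto
  define s where "s = (of_real (sqrt (real (Suc m))) :: complex)"
  define X where "X = (\<lambda>b. u (hd b) * app N (Suc m) (annihilation N m u) \<zeta> (tl b))"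
  have "sqrt (real (Suc m)) * sqrt (real (Suc m)) = real (Suc m)" by simp
  then have ss: "s * s = of_nat (Suc m)" unfolding s_def of_real_mult[symmetric] by simp
  have "app N n (number_op N n u) \<zeta> = app N m (creation N m u) (app N (Suc m) (annihilation N m u) \<zeta>)"
    unfolding nm number_op.simps by (rule app_mmul)
  also have "\<dots> = (\<lambda>a. s * app N n (sym_proj N n) X a)"
    unfolding nm s_def X_def by (rule ext, rule cr_app)
  finally have "app N n (number_op N n u) \<zeta> = (\<lambda>a. s * app N n (sym_proj N n) X a)" .
  then have "phi d (app N n (number_op N n u) \<zeta>) = s * phi d (app N n (sym_proj N n) X)"
    by (simp add: phi_scale)
  also have "\<dots> = s * ((\<Sum>\<sigma>\<in>perms n. phi (permute_list \<sigma> d) X) / of_nat (fact n))"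
    by (simp add: phi_P[OF d])
  also have "\<dots> = s * ((\<Sum>\<sigma>\<in>perms n. (if d!(\<sigma> 0) = p then 1 else 0) * s * phi d \<zeta>) / of_nat (fact n))"
  proof -
    have "phi (permute_list \<sigma> d) X = (if d!(\<sigma> 0) = p then 1 else 0) * s * phi d \<zeta>" if sg: "\<sigma> \<in> perms n" for \<sigma>
    proof -
      have pd: "permute_list \<sigma> d \<in> idx N (Suc m)" using pl_idx[OF sg d] nm by simp
      have "(permute_list \<sigma> d)!0 = d!(\<sigma> 0)"
        using permute_list_nth[of \<sigma> d 0] sg d nm by (simp add: perms_def idx_len)
      then show ?thesis using phi_hd[OF pd, of \<zeta>] z nm phi_sym[OF z sg d] by (simp add: X_def s_def)
    qed
    then show ?thesis by simp
  qed
  also have "\<dots> = s * s * (of_nat (card {\<sigma>\<in>perms n. d!(\<sigma> 0) = p}) * phi d \<zeta>) / of_nat (fact n)"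
  proof -
    have "(\<Sum>\<sigma>\<in>perms n. (if d!(\<sigma> 0) = p then 1 else 0) * s * phi d \<zeta>)
        = (\<Sum>\<sigma>\<in>perms n. (if d!(\<sigma> 0) = p then 1 else 0)) * s * phi d \<zeta>"
      by (simp add: sum_distrib_right)
    also have "\<dots> = of_nat (card {\<sigma>\<in>perms n. d!(\<sigma> 0) = p}) * s * phi d \<zeta>"
      using sum_ind_card[of "perms n" "\<lambda>\<sigma>. d!(\<sigma> 0) = p" 1] by simp
    finally show ?thesis by (simp add: mult_ac)
  qed
  also have "card {\<sigma>\<in>perms n. d!(\<sigma> 0) = p} = card {t. t < n \<and> d!t = p} * fact m"
    using count_front[OF idx_len[OF d] n] nm by simp
  finally have "phi d (app N n (number_op N n u) \<zeta>)
     = of_nat (Suc m) * (of_nat (card {t. t < n \<and> d!t = p} * fact m) * phi d \<zeta>) / of_nat (fact (Suc m))"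
    unfolding ss nm by simp
  also have "\<dots> = of_nat (card {t. t < n \<and> d!t = p}) * phi d \<zeta>"
  proof -
    have nz: "(of_nat (Suc m) :: complex) \<noteq> 0" "(of_nat (fact m) :: complex) \<noteq> 0"
      by (simp only: of_nat_eq_0_iff; simp)+
    show ?thesis unfolding fact_Suc of_nat_mult using nz by (simp add: divide_simps del: of_nat_Suc)
  qed
  finally show ?thesis .
qed


lemma phi_T: assumes z: "symt N n \<zeta>" and d: "d \<in> idx N n" and nj: "n = j + l"
  shows "phi d (app N n (T_op N j l (proj_pow u)) \<zeta>)
    = of_real (f_ell j l (card {t. t < n \<and> d!t = p})) / of_nat (fact j) * phi d \<zeta>"
proof -
  define s where "s = (of_nat (fact n) / of_nat (fact j) :: complex)"
  define m where "m = card {t. t < n \<and> d!t = p}"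
  define G where "G = id_tensor l (proj_pow u)"
  have ln: "l \<le> n" using nj by simp
  have "app N n (T_op N j l (proj_pow u)) \<zeta>
      = (\<lambda>a. s * app N n (mmul N n (mmul N n (sym_proj N n) G) (sym_proj N n)) \<zeta> a)"
    unfolding T_op_def nj s_def G_def by (rule app_scale)
  also have "app N n (mmul N n (mmul N n (sym_proj N n) G) (sym_proj N n)) \<zeta>
      = app N n (sym_proj N n) (app N n G \<zeta>)"
    by (simp add: app_mmul symt_P[OF z])
  finally have e1: "app N n (T_op N j l (proj_pow u)) \<zeta> = (\<lambda>a. s * app N n (sym_proj N n) (app N n G \<zeta>) a)" .
  have e2: "phi (permute_list \<sigma> d) (app N n G \<zeta>) = (if \<forall>t\<in>{l..<n}. d!(\<sigma> t) = p then 1 else 0) * phi d \<zeta>"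
    if sg: "\<sigma> \<in> perms n" for \<sigma>
  proof -
    have pd: "permute_list \<sigma> d \<in> idx N n" using pl_idx[OF sg d] .
    have "(\<forall>t\<in>{l..<n}. (permute_list \<sigma> d)!t = p) \<longleftrightarrow> (\<forall>t\<in>{l..<n}. d!(\<sigma> t) = p)"
      using permute_list_nth[of \<sigma> d] sg idx_len[OF d] by (auto simp: perms_def)
    then show ?thesis unfolding G_def phi_Gamma[OF pd ln] phi_sym[OF z sg d] by simp
  qed
  have "phi d (app N n (T_op N j l (proj_pow u)) \<zeta>) = s * phi d (app N n (sym_proj N n) (app N n G \<zeta>))"
    unfolding e1 by (rule phi_scale)
  also have "\<dots> = s * ((\<Sum>\<sigma>\<in>perms n. (if \<forall>t\<in>{l..<n}. d!(\<sigma> t) = p then 1 else 0) * phi d \<zeta>) / of_nat (fact n))"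
    unfolding phi_P[OF d] using e2 by simp
  also have "(\<Sum>\<sigma>\<in>perms n. (if \<forall>t\<in>{l..<n}. d!(\<sigma> t) = p then 1 else 0) * phi d \<zeta>)
      = of_nat (card {\<sigma>\<in>perms n. \<forall>t\<in>{l..<n}. d!(\<sigma> t) = p}) * phi d \<zeta>"
    unfolding sum_distrib_right[symmetric] using sum_ind_card[of "perms n" _ 1] by simp
  also have "card {\<sigma>\<in>perms n. \<forall>t\<in>{l..<n}. d!(\<sigma> t) = p}
      = (if j \<le> m then fact l * \<Prod>{m - j + 1 .. m} else 0)"
    using count_suffix[OF idx_len[OF d] ln, of p] nj by (simp add: m_def)
  also have "(of_nat (if j \<le> m then fact l * \<Prod>{m - j + 1 .. m} else 0) :: complex) = of_real (f_ell j l m)"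
    using K_eq[of j m l] by (auto simp: f_ell_def)
  finally have "phi d (app N n (T_op N j l (proj_pow u)) \<zeta>) = s * (of_real (f_ell j l m) * phi d \<zeta> / of_nat (fact n))"
    by simp
  also have "\<dots> = of_real (f_ell j l m) / of_nat (fact j) * phi d \<zeta>"
  proof -
    have nz: "(of_nat (fact n) :: complex) \<noteq> 0" "(of_nat (fact j) :: complex) \<noteq> 0"
      by (simp only: of_nat_eq_0_iff; simp)+
    show ?thesis unfolding s_def using nz by (simp add: divide_simps)
  qed
  finally show ?thesis by (simp add: m_def)
qed


definition mcount :: "nat list \<Rightarrow> nat" where
  "mcount d = card {t. t < length d \<and> d!t = p}"

lemma mcount_mset: "mcount d = count (mset d) p"
proof -
  have "card {t. t < length d \<and> d!t = p} = card {t. t < length d \<and> p = d!t}"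
    by (rule arg_cong[where f=card]) auto
  then show ?thesis by (simp add: mcount_def count_mset count_list_eq_length_filter length_filter_conv_card)
qed

definition S :: "nat list \<Rightarrow> tensor" where
  "S d = app N (length d) (sym_proj N (length d)) (Bt d)"

lemma phi_diff: "phi d (\<lambda>a. X a - Y a) = phi d X - phi d Y"
  by (simp add: phi_def sum_subtractf algebra_simps)

lemma symt_supp: "symt N n \<zeta> \<Longrightarrow> supp n \<zeta>"
  by (simp add: symt_def supp_def)

lemma phi_S: assumes d: "d \<in> idx N n" and e: "e \<in> idx N n"
  shows "phi e (S d) = of_nat (card {\<sigma>\<in>perms n. permute_list \<sigma> e = d}) / of_nat (fact n)"
proof -
  have "phi e (S d) = (\<Sum>\<sigma>\<in>perms n. phi (permute_list \<sigma> e) (Bt d)) / of_nat (fact n)"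
    unfolding S_def idx_len[OF d] by (rule phi_P[OF e])
  also have "\<dots> = (\<Sum>\<sigma>\<in>perms n. if permute_list \<sigma> e = d then 1 else 0) / of_nat (fact n)"
    using T1[OF d pl_idx[OF _ e]] by simp
  also have "\<dots> = of_nat (card {\<sigma>\<in>perms n. permute_list \<sigma> e = d}) / of_nat (fact n)"
    using sum_ind_card[of "perms n" _ 1] by simp
  finally show ?thesis .
qed

lemma id_perms: "id \<in> perms n" by (simp add: perms_def permutes_id)

lemma phi_S_self: assumes d: "d \<in> idx N n" shows "phi d (S d) \<noteq> 0"
proof -
  have "id \<in> {\<sigma>\<in>perms n. permute_list \<sigma> d = d}" using id_perms by simp
  then have "card {\<sigma>\<in>perms n. permute_list \<sigma> d = d} \<noteq> 0" by (auto simp: card_eq_0_iff)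
  moreover have "(of_nat (fact n) :: complex) \<noteq> 0" by (simp only: of_nat_eq_0_iff; simp)
  ultimately show ?thesis using phi_S[OF d d] by simp
qed

lemma phi_S_nz: assumes d: "d \<in> idx N n" and e: "e \<in> idx N n" and nz: "phi e (S d) \<noteq> 0"
  shows "mset e = mset d"
proof -
  have "card {\<sigma>\<in>perms n. permute_list \<sigma> e = d} \<noteq> 0" using nz phi_S[OF d e] by auto
  then have "{\<sigma>\<in>perms n. permute_list \<sigma> e = d} \<noteq> {}" by (metis card.empty)
  then obtain \<sigma> where "\<sigma> \<in> perms n" "permute_list \<sigma> e = d" by blast
  then show ?thesis using idx_len[OF e] by (auto simp: perms_def)
qed

lemma S_symt: "symt N (length d) (S d)" unfolding S_def by (rule P_symt)

lemma S_nonzero: assumes "d \<in> idx N n" shows "S d \<noteq> 0"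
  using phi_S_self[OF assms] by (auto simp: phi_def)

lemma eig_S: assumes d: "d \<in> idx N n" and Y: "supp n Y"
    and h: "\<And>e. e \<in> idx N n \<Longrightarrow> phi e Y = g (mcount e) * phi e (S d)"
  shows "Y = (\<lambda>a. g (mcount d) * S d a)"
proof -
  have ld: "length d = n" using d by (simp add: idx_len)
  have "(\<lambda>a. Y a - g (mcount d) * S d a) = 0"
  proof (rule zero_crit)
    show "supp n (\<lambda>a. Y a - g (mcount d) * S d a)"
      using Y symt_supp[OF S_symt[of d]] ld by (simp add: supp_def)
    fix e assume e: "e \<in> idx N n"
    show "phi e (\<lambda>a. Y a - g (mcount d) * S d a) = 0"
    proof (cases "phi e (S d) = 0")
      case True then show ?thesis by (simp add: phi_diff phi_scale h[OF e])
    next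
      case False
      then have "mset e = mset d" by (rule phi_S_nz[OF d e])
      then have "mcount e = mcount d" by (simp add: mcount_mset)
      then show ?thesis by (simp add: phi_diff phi_scale h[OF e])
    qed
  qed
  then show ?thesis by (simp add: fun_eq_iff)
qed

lemma phi_perm_symt: assumes "symt N n \<zeta>" "\<sigma> \<in> perms n" "c \<in> idx N n"
  shows "phi (permute_list \<sigma> c) \<zeta> = phi c \<zeta>" using phi_sym[OF assms] .

lemma mcount_perm: assumes "\<sigma> \<in> perms n" "c \<in> idx N n" shows "mcount (permute_list \<sigma> c) = mcount c"
  using assms by (simp add: mcount_mset perms_def idx_len)

lemma exists_nz: assumes "symt N n \<zeta>" "\<zeta> \<noteq> 0" shows "\<exists>e\<in>idx N n. phi e \<zeta> \<noteq> 0"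
  using zero_crit[OF symt_supp[OF assms(1)]] assms(2) by blast

lemma phi_number': assumes z: "symt N n \<zeta>" and d: "d \<in> idx N n"
  shows "phi d (app N n (number_op N n u) \<zeta>) = of_nat (mcount d) * phi d \<zeta>"
proof (cases n)
  case 0
  then show ?thesis using d by (simp add: app_def phi_def mcount_def idx_len)
next
  case (Suc m)
  then show ?thesis using phi_number[OF z d] d by (simp add: mcount_def idx_len)
qed


lemma phi_sum: "phi d (\<lambda>a. \<Sum>i\<in>I. c i * X i a) = (\<Sum>i\<in>I. c i * phi d (X i))"
  unfolding phi_def by (simp add: sum_distrib_left sum.swap[of _ I] mult_ac)

lemma op_pow_num: assumes z: "symt N n \<zeta>" and d: "d \<in> idx N n"
  shows "phi d (app N n (op_pow N n (number_op N n u) i) \<zeta>) = of_nat (mcount d) ^ i * phi d \<zeta>"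
proof -
  have "symt N n (app N n (op_pow N n (number_op N n u) i) \<zeta>) \<and>
        (\<forall>d\<in>idx N n. phi d (app N n (op_pow N n (number_op N n u) i) \<zeta>) = of_nat (mcount d) ^ i * phi d \<zeta>)"
  proof (induction i)
    case 0
    have "app N n (id_op N n) \<zeta> = \<zeta>" using z by (intro app_id_op) (simp add: symt_def)
    then show ?case using z by simp
  next
    case (Suc i)
    have e: "app N n (op_pow N n (number_op N n u) (Suc i)) \<zeta>
        = app N n (number_op N n u) (app N n (op_pow N n (number_op N n u) i) \<zeta>)"
      by (simp add: app_mmul)
    show ?case unfolding e using Suc.IH number_symt phi_number' by simp
  qed
  then show ?thesis using d by blast
qed

lemma phi_poly_op: assumes z: "symt N n \<zeta>" and d: "d \<in> idx N n"
  shows "phi d (app N n (poly_op N n L (number_op N n u)) \<zeta>) = poly L (of_nat (mcount d)) * phi d \<zeta>"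
  unfolding app_poly_op phi_sum op_pow_num[OF z d] poly_altdef
  by (simp add: sum_distrib_left mult_ac)

lemma spec_number: "specH N n (number_op N n u) \<subseteq> of_nat ` {..n}"
proof
  fix c assume "c \<in> specH N n (number_op N n u)"
  then obtain \<psi> where p: "\<psi> \<in> Hsym N n" "\<psi> \<noteq> 0" "app N n (number_op N n u) \<psi> = (\<lambda>a. c * \<psi> a)"
    by (auto simp: specH_def)
  have z: "symt N n \<psi>" using p(1) by (simp add: Hsym_symt)
  obtain e where e: "e \<in> idx N n" "phi e \<psi> \<noteq> 0" using exists_nz[OF z p(2)] by blast
  have "of_nat (mcount e) * phi e \<psi> = c * phi e \<psi>"
    using phi_number'[OF z e(1)] p(3) phi_scale[of e c \<psi>] by auto
  then have "c = of_nat (mcount e)" using e(2) by auto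
  moreover have "mcount e \<le> n"
  proof -
    have "{t. t < length e \<and> e!t = p} \<subseteq> {..<n}" using e(1) by (auto simp: idx_len)
    then show ?thesis unfolding mcount_def using card_mono[of "{..<n}"] by fastforce
  qed
  ultimately show "c \<in> of_nat ` {..n}" by auto
qed

lemma spec_number_in: assumes d: "d \<in> idx N n" shows "of_nat (mcount d) \<in> specH N n (number_op N n u)"
proof -
  have ld: "length d = n" using d by (simp add: idx_len)
  have Sz: "symt N n (S d)" using S_symt[of d] ld by simp
  have "app N n (number_op N n u) (S d) = (\<lambda>a. of_nat (mcount d) * S d a)"
    by (rule eig_S[OF d symt_supp[OF number_symt]]) (rule phi_number'[OF Sz])
  then show ?thesis unfolding specH_def using Sz S_nonzero[OF d] by (auto simp: Hsym_symt)
qed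

lemma part1: assumes nj: "n = j + l" and psi: "\<psi> \<in> Hsym N n"
  shows "app N n (T_op N j l (proj_pow u)) \<psi>
       = (\<lambda>a. (1 / of_nat (fact j)) * app N n (fcalc N n (nat_ext (f_ell j l)) (number_op N n u)) \<psi> a)"
proof -
  have z: "symt N n \<psi>" using psi by (simp add: Hsym_symt)
  define Sp where "Sp = specH N n (number_op N n u)"
  define L where "L = (\<Sum>c\<in>Sp. smult (nat_ext (f_ell j l) c) (\<Prod>\<mu>\<in>Sp - {c}. smult (1 / (c - \<mu>)) [:- \<mu>, 1:]))"
  have finSp: "finite Sp" unfolding Sp_def by (rule finite_subset[OF spec_number]) simp
  have fc: "app N n (fcalc N n (nat_ext (f_ell j l)) (number_op N n u)) \<psi>
      = app N n (sym_proj N n) (app N n (poly_op N n L (number_op N n u)) \<psi>)"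
    unfolding fcalc_def L_def Sp_def by (rule app_mmul)
  let ?R = "\<lambda>a. (1 / of_nat (fact j)) * app N n (fcalc N n (nat_ext (f_ell j l)) (number_op N n u)) \<psi> a"
  let ?T = "app N n (T_op N j l (proj_pow u)) \<psi>"
  have "(\<lambda>a. ?T a - ?R a) = 0"
  proof (rule zero_crit)
    have s1: "symt N n ?T" using T_symt[of N j l] nj by simp
    have s2: "symt N n ?R" unfolding fc by (intro symt_scale P_symt)
    show "supp n (\<lambda>a. ?T a - ?R a)" using s1 s2 by (simp add: symt_def supp_def)
    fix e assume e: "e \<in> idx N n"
    have pT: "phi e ?T = of_real (f_ell j l (mcount e)) / of_nat (fact j) * phi e \<psi>"
      using phi_T[OF z e nj] e by (simp add: mcount_def idx_len)
    have "phi e (app N n (sym_proj N n) (app N n (poly_op N n L (number_op N n u)) \<psi>))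
        = (\<Sum>\<sigma>\<in>perms n. poly L (of_nat (mcount e)) * phi e \<psi>) / of_nat (fact n)"
      unfolding phi_P[OF e] using phi_poly_op[OF z pl_idx[OF _ e]] mcount_perm[OF _ e] phi_sym[OF z _ e]
      by simp
    also have "\<dots> = poly L (of_nat (mcount e)) * phi e \<psi>" by (simp add: card_perms)
    finally have pR: "phi e ?R = (1 / of_nat (fact j)) * (poly L (of_nat (mcount e)) * phi e \<psi>)"
      unfolding fc phi_scale by simp
    have "phi e (\<lambda>a. ?T a - ?R a) = phi e ?T - phi e ?R" by (rule phi_diff)
    also have "\<dots> = of_real (f_ell j l (mcount e)) / of_nat (fact j) * phi e \<psi>
         - (1 / of_nat (fact j)) * (poly L (of_nat (mcount e)) * phi e \<psi>)" unfolding pT pR ..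
    also have "\<dots> = 0"
    proof (cases "phi e \<psi> = 0")
      case True then show ?thesis by simp
    next
      case False
      have "of_nat (mcount e) \<in> Sp" unfolding Sp_def by (rule spec_number_in[OF e])
      then have "poly L (of_nat (mcount e)) = nat_ext (f_ell j l) (of_nat (mcount e))"
        unfolding L_def by (rule lagrange[OF finSp])
      then show ?thesis by (simp add: nat_ext_nat)
    qed
    finally show "phi e (\<lambda>a. ?T a - ?R a) = 0" .
  qed
  then show ?thesis by (simp add: fun_eq_iff)
qed


lemma T_eig_S: assumes d: "d \<in> idx N (M + k)"
  shows "app N (M + k) (T_op N M k (proj_pow u)) (S d)
       = (\<lambda>a. (of_real (f_ell M k (mcount d)) / of_nat (fact M)) * S d a)"
proof (rule eig_S[OF d symt_supp[OF T_symt]])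
  have Sz: "symt N (M + k) (S d)" using S_symt[of d] d by (simp add: idx_len)
  fix e assume e: "e \<in> idx N (M + k)"
  show "phi e (app N (M + k) (T_op N M k (proj_pow u)) (S d)) = of_real (f_ell M k (mcount e)) / of_nat (fact M) * phi e (S d)"
    using phi_T[OF Sz e refl] e by (simp add: mcount_def idx_len)
qed

lemma mcount_rep: "q \<noteq> p \<Longrightarrow> mcount (replicate m p @ replicate r q) = m"
  by (simp add: mcount_mset)

lemma mcount_le: "e \<in> idx N n \<Longrightarrow> mcount e \<le> n"
proof -
  assume e: "e \<in> idx N n"
  have "{t. t < length e \<and> e!t = p} \<subseteq> {..<n}" using e by (auto simp: idx_len)
  then show ?thesis unfolding mcount_def using card_mono[of "{..<n}"] by fastforce
qed

lemma part3: assumes M: "1 \<le> M" and N2: "2 \<le> N"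
  shows "specH N (M + k) (T_op N M k (proj_pow u)) - {0}
       = (\<lambda>m. of_real (fact k * fact m / (fact M * fact (m - M)))) ` {M..M + k}"
proof
  show "specH N (M + k) (T_op N M k (proj_pow u)) - {0}
       \<subseteq> (\<lambda>m. of_real (fact k * fact m / (fact M * fact (m - M)))) ` {M..M + k}"
  proof
    fix c assume c: "c \<in> specH N (M + k) (T_op N M k (proj_pow u)) - {0}"
    then obtain \<psi> where p: "\<psi> \<in> Hsym N (M + k)" "\<psi> \<noteq> 0"
        "app N (M + k) (T_op N M k (proj_pow u)) \<psi> = (\<lambda>a. c * \<psi> a)"
      by (auto simp: specH_def)
    have z: "symt N (M + k) \<psi>" using p(1) by (simp add: Hsym_symt)
    obtain e where e: "e \<in> idx N (M + k)" "phi e \<psi> \<noteq> 0" using exists_nz[OF z p(2)] by blast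
    have "of_real (f_ell M k (mcount e)) / of_nat (fact M) * phi e \<psi> = c * phi e \<psi>"
      using phi_T[OF z e(1) refl] p(3) phi_scale[of e c \<psi>] e(1) by (simp add: mcount_def idx_len)
    then have cv: "c = of_real (f_ell M k (mcount e)) / of_nat (fact M)" using mult_right_cancel[OF e(2)] by metis
    have "f_ell M k (mcount e) \<noteq> 0" using cv c by auto
    then have Me: "M \<le> mcount e" by (simp add: f_ell_def split: if_splits)
    moreover have "mcount e \<le> M + k" by (rule mcount_le[OF e(1)])
    ultimately show "c \<in> (\<lambda>m. of_real (fact k * fact m / (fact M * fact (m - M)))) ` {M..M + k}"
      using cv val_eq[OF Me, of k] by auto
  qed
  show "(\<lambda>m. of_real (fact k * fact m / (fact M * fact (m - M)))) ` {M..M + k}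
     \<subseteq> specH N (M + k) (T_op N M k (proj_pow u)) - {0}"
  proof
    fix c :: complex assume "c \<in> (\<lambda>m. of_real (fact k * fact m / (fact M * fact (m - M)))) ` {M..M + k}"
    then obtain m where m: "M \<le> m" "m \<le> M + k" and cm: "c = of_real (fact k * fact m / (fact M * fact (m - M)))"
      by auto
    define q where "q = (if p = 0 then 1 else (0::nat))"
    have q: "q \<noteq> p" "q < N" using N2 by (auto simp: q_def)
    define d where "d = replicate m p @ replicate (M + k - m) q"
    have d: "d \<in> idx N (M + k)" using m q pN by (auto simp: d_def idx_def)
    have md: "mcount d = m" unfolding d_def by (rule mcount_rep[OF q(1)])
    have Sz: "symt N (M + k) (S d)" using S_symt[of d] d by (simp add: idx_len)
    have tc: "(of_real (f_ell M k (mcount d)) / of_nat (fact M) :: complex) = c"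
      using md val_eq[OF m(1), of k] cm by simp
    have "app N (M + k) (T_op N M k (proj_pow u)) (S d) = (\<lambda>a. c * S d a)"
      using T_eig_S[OF d] unfolding tc .
    then have "c \<in> specH N (M + k) (T_op N M k (proj_pow u))"
      unfolding specH_def using Sz S_nonzero[OF d] by (auto simp: Hsym_symt)
    moreover have "c \<noteq> 0" using cm m by simp
    ultimately show "c \<in> specH N (M + k) (T_op N M k (proj_pow u)) - {0}" by simp
  qed
qed


lemma S_mset: assumes c: "c \<in> idx N n" and c': "c' \<in> idx N n" and eq: "mset c = mset c'"
  shows "S c = S c'"
proof -
  obtain \<rho> where r: "\<rho> permutes {..<length c}" "permute_list \<rho> c = c'"
    using mset_eq_permutation[OF eq[symmetric]] by blast
  have rp: "\<rho> \<in> perms n" using r(1) c by (simp add: perms_def idx_len)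
  have card_eq: "card {\<sigma>\<in>perms n. permute_list \<sigma> e = c} = card {\<sigma>\<in>perms n. permute_list \<sigma> e = c'}"
    if e: "e \<in> idx N n" for e
  proof (rule bij_betw_same_card[of "\<lambda>\<sigma>. \<sigma> \<circ> \<rho>"], rule bij_betw_byWitness[where f'="\<lambda>\<sigma>. \<sigma> \<circ> inv \<rho>"])
    have r1: "\<rho> \<circ> inv \<rho> = id" "inv \<rho> \<circ> \<rho> = id" using r(1) by (simp_all add: permutes_inv_o)
    show "\<forall>a\<in>{\<sigma> \<in> perms n. permute_list \<sigma> e = c}. a \<circ> \<rho> \<circ> inv \<rho> = a"
      using r1 by (simp add: o_assoc[symmetric])
    show "\<forall>a\<in>{\<sigma> \<in> perms n. permute_list \<sigma> e = c'}. a \<circ> inv \<rho> \<circ> \<rho> = a"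
      using r1 by (simp add: o_assoc[symmetric])
    show "(\<lambda>\<sigma>. \<sigma> \<circ> \<rho>) ` {\<sigma> \<in> perms n. permute_list \<sigma> e = c} \<subseteq> {\<sigma> \<in> perms n. permute_list \<sigma> e = c'}"
    proof
      fix x assume "x \<in> (\<lambda>\<sigma>. \<sigma> \<circ> \<rho>) ` {\<sigma> \<in> perms n. permute_list \<sigma> e = c}"
      then obtain \<sigma> where s: "\<sigma> \<in> perms n" "permute_list \<sigma> e = c" and x: "x = \<sigma> \<circ> \<rho>" by blast
      have "permute_list (\<sigma> \<circ> \<rho>) e = permute_list \<rho> (permute_list \<sigma> e)"
        using pl_comp[OF rp s(1) idx_len[OF e]] by simp
      then show "x \<in> {\<sigma> \<in> perms n. permute_list \<sigma> e = c'}"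
        using s r(2) comp_perms[OF rp s(1)] x by simp
    qed
    show "(\<lambda>\<sigma>. \<sigma> \<circ> inv \<rho>) ` {\<sigma> \<in> perms n. permute_list \<sigma> e = c'} \<subseteq> {\<sigma> \<in> perms n. permute_list \<sigma> e = c}"
    proof
      fix x assume "x \<in> (\<lambda>\<sigma>. \<sigma> \<circ> inv \<rho>) ` {\<sigma> \<in> perms n. permute_list \<sigma> e = c'}"
      then obtain \<sigma> where s: "\<sigma> \<in> perms n" "permute_list \<sigma> e = c'" and x: "x = \<sigma> \<circ> inv \<rho>" by blast
      have ir: "inv \<rho> \<in> perms n" by (rule inv_perms[OF rp])
      have "permute_list (\<sigma> \<circ> inv \<rho>) e = permute_list (inv \<rho>) (permute_list \<sigma> e)"
        using pl_comp[OF ir s(1) idx_len[OF e]] by simp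
      also have "\<dots> = c" using s(2) r(2) pl_inv[OF rp idx_len[OF c]] by simp
      finally show "x \<in> {\<sigma> \<in> perms n. permute_list \<sigma> e = c}"
        using comp_perms[OF ir s(1)] x by simp
    qed
  qed
  have lc: "length c = n" "length c' = n" using c c' by (auto simp: idx_len)
  have "(\<lambda>a. S c a - S c' a) = 0"
  proof (rule zero_crit)
    show "supp n (\<lambda>a. S c a - S c' a)"
      using symt_supp[OF S_symt[of c]] symt_supp[OF S_symt[of c']] lc by (simp add: supp_def)
    fix e assume e: "e \<in> idx N n"
    show "phi e (\<lambda>a. S c a - S c' a) = 0"
      unfolding phi_diff phi_S[OF c e] phi_S[OF c' e] card_eq[OF e] by simp
  qed
  then show ?thesis by (simp add: fun_eq_iff)
qed

definition dX :: "nat \<Rightarrow> nat multiset \<Rightarrow> nat list" where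
  "dX m X = replicate m p @ sorted_list_of_multiset X"

lemma mset_dX: "mset (dX m X) = replicate_mset m p + X"
  by (simp add: dX_def)

lemma dX_idx: assumes X: "X \<in> multisets_of_size ({..<N} - {p}) (n - m)" and m: "m \<le> n"
  shows "dX m X \<in> idx N n"
proof -
  have "length (sorted_list_of_multiset X) = size X" by (metis mset_sorted_list_of_multiset size_mset)
  then have "length (dX m X) = n" using X m by (simp add: dX_def multisets_of_size_def)
  moreover have "set (dX m X) \<subseteq> {..<N}" using X pN by (auto simp: dX_def multisets_of_size_def)
  ultimately show ?thesis by (simp add: idx_def)
qed

lemma mcount_dX: assumes X: "X \<in> multisets_of_size ({..<N} - {p}) r" shows "mcount (dX m X) = m"
proof -
  have "p \<notin># X" using X by (auto simp: multisets_of_size_def)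
  then show ?thesis by (simp add: mcount_mset mset_dX not_in_iff)
qed

lemma phi_fsum: assumes "finite B"
  shows "phi e (\<Sum>w\<in>B. tensor_scale (c w) w) = (\<Sum>w\<in>B. c w * phi e w)"
  unfolding phi_def sum_fun_apply tensor_scale_def
  by (simp add: sum_distrib_left sum.swap[of _ B] mult_ac)


lemma part4: assumes M: "1 \<le> M" and N2: "2 \<le> N" and mM: "M \<le> m" and mk: "m \<le> M + k"
  shows "vector_space.dim tensor_scale
          {\<psi>\<in>Hsym N (M + k). app N (M + k) (T_op N M k (proj_pow u)) \<psi>
              = tensor_scale (of_real (fact k * fact m / (fact M * fact (m - M)))) \<psi>}
        = (M + k - m + N - 2) choose (N - 2)"
proof -
  interpret vs: vector_space tensor_scale by (rule vs_tensor)
  define n where "n = M + k"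
  define lam where "lam = (of_real (fact k * fact m / (fact M * fact (m - M))) :: complex)"
  define E where "E = {\<psi>\<in>Hsym N n. app N n (T_op N M k (proj_pow u)) \<psi> = tensor_scale lam \<psi>}"
  define R where "R = multisets_of_size ({..<N} - {p}) (n - m)"
  define B where "B = (\<lambda>X. S (dX m X)) ` R"
  have mn: "m \<le> n" using mk by (simp add: n_def)
  have lam: "lam = of_real (f_ell M k m) / of_nat (fact M)" using val_eq[OF mM, of k] by (simp add: lam_def)
  have finR: "finite R" unfolding R_def by (rule finite_multisets_of_size) simp
  have finB: "finite B" unfolding B_def using finR by simp
  have dXi: "dX m X \<in> idx N n" if "X \<in> R" for X using dX_idx[OF _ mn] that by (simp add: R_def)
  have eigc: "mcount e = m" if z: "\<psi> \<in> E" and e: "e \<in> idx N n" and nz: "phi e \<psi> \<noteq> 0" for \<psi> e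
  proof -
    have zs: "symt N n \<psi>" using z by (simp add: E_def Hsym_symt)
    have nk: "n = M + k" by (simp add: n_def)
    have h1: "phi e (app N n (T_op N M k (proj_pow u)) \<psi>) = of_real (f_ell M k (mcount e)) / of_nat (fact M) * phi e \<psi>"
      using phi_T[OF zs e nk] e by (simp add: mcount_def idx_len)
    have h2: "app N n (T_op N M k (proj_pow u)) \<psi> = (\<lambda>a. lam * \<psi> a)"
      using z by (simp add: E_def tensor_scale_def)
    have "of_real (f_ell M k (mcount e)) / of_nat (fact M) * phi e \<psi> = lam * phi e \<psi>"
      using h1 unfolding h2 phi_scale by simp
    then have "of_real (f_ell M k (mcount e)) / of_nat (fact M) = lam" using mult_right_cancel[OF nz] by metis
    then have "f_ell M k (mcount e) = f_ell M k m" unfolding lam by simp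
    then show ?thesis by (rule f_inj[OF M mM])
  qed
  have BE: "B \<subseteq> E"
  proof
    fix w assume "w \<in> B"
    then obtain X where X: "X \<in> R" and w: "w = S (dX m X)" by (auto simp: B_def)
    have d: "dX m X \<in> idx N n" by (rule dXi[OF X])
    have Sz: "symt N n w" using S_symt[of "dX m X"] d w by (simp add: idx_len)
    have "app N n (T_op N M k (proj_pow u)) w = (\<lambda>a. lam * w a)"
      using T_eig_S[of "dX m X"] d mcount_dX[of X] X lam w by (simp add: n_def R_def)
    then show "w \<in> E" using Sz by (simp add: E_def Hsym_symt tensor_scale_def)
  qed
  have phiB: "phi (dX m Y) (S (dX m X)) = 0" if "X \<in> R" "Y \<in> R" "X \<noteq> Y" for X Y
  proof (rule ccontr)
    assume "phi (dX m Y) (S (dX m X)) \<noteq> 0"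
    then have "mset (dX m Y) = mset (dX m X)" by (rule phi_S_nz[OF dXi[OF that(1)] dXi[OF that(2)]])
    then show False using that by (simp add: mset_dX)
  qed
  have inj: "inj_on (\<lambda>X. S (dX m X)) R"
  proof (rule inj_onI, rule ccontr)
    fix X Y assume XY: "X \<in> R" "Y \<in> R" "S (dX m X) = S (dX m Y)" "X \<noteq> Y"
    have "phi (dX m Y) (S (dX m Y)) \<noteq> 0" by (rule phi_S_self[OF dXi[OF XY(2)]])
    then show False using phiB[OF XY(1,2,4)] XY(3) by simp
  qed
  have indep: "vs.independent B"
  proof
    assume "vs.dependent B"
    then obtain c v where v: "v \<in> B" "c v \<noteq> 0" and s0: "(\<Sum>w\<in>B. tensor_scale (c w) w) = 0"
      unfolding vs.dependent_finite[OF finB] by blast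
    obtain X where X: "X \<in> R" and vX: "v = S (dX m X)" using v(1) by (auto simp: B_def)
    have "0 = phi (dX m X) (\<Sum>w\<in>B. tensor_scale (c w) w)" unfolding s0 by (simp add: phi_def)
    also have "\<dots> = (\<Sum>w\<in>B. c w * phi (dX m X) w)" by (rule phi_fsum[OF finB])
    also have "\<dots> = c v * phi (dX m X) v + (\<Sum>w\<in>B - {v}. c w * phi (dX m X) w)"
      by (rule sum.remove[OF finB v(1)])
    also have "(\<Sum>w\<in>B - {v}. c w * phi (dX m X) w) = 0"
    proof (rule sum.neutral, rule ballI)
      fix w assume w: "w \<in> B - {v}"
      then obtain Y where Y: "Y \<in> R" and wY: "w = S (dX m Y)" by (auto simp: B_def)
      have "Y \<noteq> X" using w wY vX by auto
      then show "c w * phi (dX m X) w = 0" using phiB[OF Y X] wY by simp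
    qed
    finally have "c v * phi (dX m X) v = 0" by simp
    moreover have "phi (dX m X) v \<noteq> 0" unfolding vX by (rule phi_S_self[OF dXi[OF X]])
    ultimately show False using v(2) by simp
  qed
  have span: "E \<subseteq> vs.span B"
  proof
    fix \<psi> assume psi: "\<psi> \<in> E"
    have zs: "symt N n \<psi>" using psi by (simp add: E_def Hsym_symt)
    have e1: "\<psi> = (\<lambda>a. \<Sum>c\<in>idx N n. phi c \<psi> * Bt c a)" using expansion[OF symt_supp[OF zs]] by blast
    have "\<psi> = app N n (sym_proj N n) \<psi>" by (rule symt_P[OF zs, symmetric])
    also have "app N n (sym_proj N n) \<psi> = app N n (sym_proj N n) (\<lambda>a. \<Sum>c\<in>idx N n. phi c \<psi> * Bt c a)"
      by (subst e1[symmetric]) (rule refl)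
    also have "\<dots> = (\<lambda>a. \<Sum>c\<in>idx N n. phi c \<psi> * app N n (sym_proj N n) (Bt c) a)" by (rule app_lin)
    also have "\<dots> = (\<lambda>a. \<Sum>c\<in>idx N n. phi c \<psi> * S c a)"
      by (intro ext sum.cong refl) (simp add: S_def idx_len)
    finally have "\<psi> = (\<lambda>a. \<Sum>c\<in>idx N n. phi c \<psi> * S c a)" .
    then have pe: "\<psi> = (\<Sum>c\<in>idx N n. tensor_scale (phi c \<psi>) (S c))"
      by (simp add: fun_eq_iff sum_fun_apply tensor_scale_def)
    have "tensor_scale (phi c \<psi>) (S c) \<in> vs.span B" if c: "c \<in> idx N n" for c
    proof (cases "phi c \<psi> = 0")
      case True
      then have t0: "tensor_scale (phi c \<psi>) (S c) = 0" by (simp add: tensor_scale_def fun_eq_iff)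
      show ?thesis unfolding t0 by (rule vs.span_zero)
    next
      case False
      have mc: "mcount c = m" by (rule eigc[OF psi c False])
      define X where "X = mset c - replicate_mset m p"
      have cp: "count (mset c) p = m" using mc by (simp add: mcount_mset)
      have sub: "replicate_mset m p \<subseteq># mset c" using cp by (simp add: subseteq_mset_def count_replicate_mset)
      have mc_eq: "mset c = replicate_mset m p + X" unfolding X_def using sub by simp
      have "set_mset X \<subseteq> {..<N} - {p}"
      proof
        fix x assume x: "x \<in># X"
        then have "x \<in># mset c" unfolding X_def by (rule in_diffD)
        then have "x \<in> set c" by simp
        then have "x < N" using c by (auto simp: idx_def)
        moreover have "x \<noteq> p"
        proof
          assume "x = p"
          have "count X p = 0" unfolding X_def using cp by simp
          then show False using x \<open>x = p\<close> by (metis count_eq_zero_iff)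
        qed
        ultimately show "x \<in> {..<N} - {p}" by simp
      qed
      moreover have "size X = n - m"
      proof -
        have "size (mset c) = n" using c by (simp add: idx_len)
        then show ?thesis using mc_eq by simp
      qed
      ultimately have XR: "X \<in> R" by (simp add: R_def multisets_of_size_def)
      have "S c = S (dX m X)"
        by (rule S_mset[OF c dXi[OF XR]]) (simp add: mset_dX mc_eq)
      then have "S c \<in> B" using XR by (auto simp: B_def)
      then show ?thesis by (intro vs.span_scale vs.span_base)
    qed
    then show "\<psi> \<in> vs.span B" by (subst pe) (rule vs.span_sum)
  qed
  have "vs.span B = vs.span E"
    unfolding vs.span_eq using BE span vs.span_superset by blast
  then have "vs.dim E = card B" using indep by (rule vs.dim_eq_card)
  also have "card B = card R" unfolding B_def by (rule card_image[OF inj])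
  also have "\<dots> = (card ({..<N} - {p}) + (n - m) - 1) choose (n - m)"
    unfolding R_def by (rule card_multisets_of_size) simp
  also have "card ({..<N} - {p}) = N - 1" using pN by simp
  also have "(N - 1 + (n - m) - 1) choose (n - m) = (n - m + N - 2) choose (N - 2)"
  proof -
    have "N - 1 + (n - m) - 1 = n - m + N - 2" using N2 by simp
    moreover have "(n - m + N - 2) choose (n - m) = (n - m + N - 2) choose (N - 2)"
      using binomial_symmetric[of "n - m" "n - m + N - 2"] N2 by simp
    ultimately show ?thesis by simp
  qed
  finally show ?thesis by (simp add: E_def n_def lam_def)
qed

end


lemma exists_p: assumes "unit_vec N u" shows "\<exists>p<N. u p \<noteq> 0"
proof (rule ccontr)
  assume "\<not> (\<exists>p<N. u p \<noteq> 0)"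
  then have "(\<Sum>i<N. (cmod (u i))\<^sup>2) = 0" by simp
  then show False using assms by (simp add: unit_vec_def)
qed

theorem mainTheorem8:
  fixes N j l M k :: nat and u v :: "nat \<Rightarrow> complex"
  assumes "N \<ge> 2" and "unit_vec N u"
    and "M \<ge> 1" and "unit_vec N v"
  shows "(\<forall>\<psi>\<in>Hsym N (j + l).
            app N (j + l) (T_op N j l (proj_pow u)) \<psi>
          = (\<lambda>a. (1 / of_nat (fact j)) *
               app N (j + l) (fcalc N (j + l) (nat_ext (f_ell j l)) (number_op N (j + l) u)) \<psi> a))
   \<and> mono (f_ell j l)
   \<and> specH N (M + k) (T_op N M k (proj_pow v)) - {0}
       = (\<lambda>m. of_real (fact k * fact m / (fact M * fact (m - M)))) ` {M..M + k}
   \<and> (\<forall>m\<in>{M..M + k}.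
        vector_space.dim tensor_scale
          {\<psi>\<in>Hsym N (M + k). app N (M + k) (T_op N M k (proj_pow v)) \<psi>
              = tensor_scale (of_real (fact k * fact m / (fact M * fact (m - M)))) \<psi>}
        = (M + k - m + N - 2) choose (N - 2))"
proof -
  obtain p where p: "p < N" "u p \<noteq> 0" using exists_p[OF assms(2)] by blast
  obtain q where q: "q < N" "v q \<noteq> 0" using exists_p[OF assms(4)] by blast
  interpret U: ubasis N u p using p assms(2) by unfold_locales
  interpret V: ubasis N v q using q assms(4) by unfold_locales
  have P1: "\<forall>\<psi>\<in>Hsym N (j + l).
            app N (j + l) (T_op N j l (proj_pow u)) \<psi>
          = (\<lambda>a. (1 / of_nat (fact j)) *
               app N (j + l) (fcalc N (j + l) (nat_ext (f_ell j l)) (number_op N (j + l) u)) \<psi> a)"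
    using U.part1[OF refl] by blast
  have P3: "specH N (M + k) (T_op N M k (proj_pow v)) - {0}
       = (\<lambda>m. of_real (fact k * fact m / (fact M * fact (m - M)))) ` {M..M + k}"
    by (rule V.part3[OF assms(3,1)])
  have P4: "\<forall>m\<in>{M..M + k}.
        vector_space.dim tensor_scale
          {\<psi>\<in>Hsym N (M + k). app N (M + k) (T_op N M k (proj_pow v)) \<psi>
              = tensor_scale (of_real (fact k * fact m / (fact M * fact (m - M)))) \<psi>}
        = (M + k - m + N - 2) choose (N - 2)"
    using V.part4[OF assms(3,1)] by auto
  show ?thesis using P1 f_mono P3 P4 by blast
qed

end
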